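(* Let $\alpha,\beta,\eta\in\mathbb{C}$. Every extension of an irreducible nontrivial module by $\mathbb{C}c_\eta$ over the algebras below can be written as $E=\mathbb{C}c_\eta\oplus\mathbb{C}[\partial]v$ with $L_\lambda v=(\partial+\alpha\lambda+\beta)v+f(\lambda)c_\eta$, $Y_\lambda v=\gamma v+g(\lambda)c_\eta$ (with $\gamma=0$ except for $TSV(1,0)$), $M_\lambda v=h(\lambda)c_\eta$, where $f,g,h\in\mathbb{C}[\lambda]$. (1)(i) For $TSV(a,b)$ with $(a,b)\neq(1,0)$ and $\alpha\neq0$: in every such extension $h=0$, and a nontrivial extension of $M_{\alpha,\beta}$ by $\mathbb{C}c_\eta$ exists iff one of the following holds; every nontrivial extension is equivalent to one with $h=0$ and $(f,g)$ as listed: (a) $g=0$, $\beta+\eta=0$, and either $\alpha=1$, $f=c_2\lambda^2$, $c_2\neq0$, or $\alpha=2$, $f=c_3\lambda^3$, $c_3\neq0$; (b) $a\neq1$, $b=0$, $\beta+\eta=0$, $\alpha=1-a$, $g=k\neq0$ constant, $f=c_2\lambda^2$ if $\alpha=1$, $f=c_3\lambda^3$ if $\alpha=2$, $f=0$ otherwise ($c_2,c_3\in\mathbb{C}$ arbitrary); (c) $a\neq1$, $b+\beta+\eta=0$, $\beta+\eta\neq0$, $\alpha=1-a$, $g=k\neq0$ constant, $f=0$; (d) $a=1$, $b\neq0$, $b+\beta+\eta=0$, $\alpha=1$, $g=k(1-\frac1b\lambda)$ with $k\neq0$, $f=0$. (1)(ii) For $TSV(1,0)$ and $(\alpha,\gamma)\neq(0,0)$: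 in every such extension of $M_{\alpha,\beta,\gamma}$ by $\mathbb{C}c_\eta$ we have $h=0$; a nontrivial extension exists iff $\beta+\eta=0$ and $\gamma=0$; and every nontrivial extension is equivalent to one with $h=0$ and either $g=0$, $\alpha\in\{1,2\}$, $f=c_2\lambda^2$ ($\alpha=1$, $c_2\neq0$) or $f=c_3\lambda^3$ ($\alpha=2$, $c_3\neq0$); or $g=k\lambda$ with $k\neq0$, $\alpha=1$, $f=c_2\lambda^2$ with $c_2\in\mathbb{C}$. (2) For $TSV(c)$ and $\alpha\neq0$: in every such extension of $M_{\alpha,\beta}$ by $\mathbb{C}c_\eta$ we have $h=0$; a nontrivial extension exists iff one of the following holds, and every nontrivial extension is equivalent to one with $h=0$ and: (a) $g=0$, $\beta+\eta=0$, and either $\alpha=1$, $f=c_2\lambda^2$, $c_2\neq0$, or $\alpha=2$, $f=c_3\lambda^3$, $c_3\neq0$; or (b) $c+\beta+\eta=0$, $\alpha=-\frac12$, $g=k\neq0$ constant, $f=0$.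
   Context: A conformal module over a Lie conformal algebra $\mathcal{R}$ is a $\mathbb{C}[\partial]$-module $V$ with $\mathbb{C}$-linear maps $a\otimes v\mapsto a_\lambda v\in V[\lambda]$ such that $(\partial a)_\lambda v=-\lambda a_\lambda v$, $a_\lambda(\partial v)=(\partial+\lambda)a_\lambda v$, and $a_\lambda(b_\mu v)-b_\mu(a_\lambda v)=[a_\lambda b]_{\lambda+\mu}v$. $TSV(a,b)$ ($a,b\in\mathbb{C}$) is the free $\mathbb{C}[\partial]$-module on $L,Y,M$ with $[L_\lambda L]=(\partial+2\lambda)L$, $[L_\lambda Y]=(\partial+a\lambda+b)Y$, $[L_\lambda M]=(\partial+2(a-1)\lambda+2b)M$, $[Y_\lambda Y]=(\partial+2\lambda)M$, $[Y_\lambda M]=[M_\lambda M]=0$. $TSV(c)$ ($c\in\mathbb{C}$) is the free $\mathbb{C}[\partial]$-module on $L,Y,M$ with $[L_\lambda L]=(\partial+2\lambda)L$, $[L_\lambda Y]=(\partial+\frac32\lambda+c)Y$, $[L_\lambda M]=(\partial+2c)M$, $[Y_\lambda Y]=(\partial+2\lambda)(-\partial-2c)M$, $[Y_\lambda M]=[M_\lambda M]=0$. For $TSV(a,b)$ with $(a,b)\neq(1,0)$ and for $TSV(c)$, $M_{\alpha,\beta}=\mathbb{C}[\partial]v$ ($\alpha\neq0$) has $L_\lambda v=(\partial+\alpha\lambda+\beta)v$, $Y_\lambda v=M_\lambda v=0$. For $TSV(1,0)$, $M_{\alpha,\beta,\gamma}=\mathbb{C}[\partial]v$ ($(\alpha,\gamma)\neq(0,0)$)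 has $L_\lambda v=(\partial+\alpha\lambda+\beta)v$, $Y_\lambda v=\gamma v$, $M_\lambda v=0$. $\mathbb{C}c_\eta$ is the one-dimensional module with $\partial c_\eta=\eta c_\eta$ and all $\lambda$-actions zero; it is a submodule of $E$. An extension is an exact sequence of modules; equivalence means a module homomorphism between middle terms compatible with the identities on the end terms; trivial means equivalent to the direct sum extension. *)

theory Defs
  imports Complex_Main "HOL-Computational_Algebra.Polynomial" "HOL-Library.Product_Plus"
begin

datatype gen = L | Y | M

text \<open>A TSV-type algebra is given by the lambda-brackets of its generators:
  [L_lam L] = bLL(d,lam) L, [L_lam Y] = bLY(d,lam) Y, [L_lam M] = bLM(d,lam) M,
  [Y_lam Y] = bYY(d,lam) M, [Y_lam M] = [M_lam M] = 0 (the remaining brackets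
  are determined by skew-symmetry).  Each field is the polynomial coefficient
  as a function of (d, lam).\<close>
record alg =
  bLL :: "complex \<Rightarrow> complex \<Rightarrow> complex"
  bLY :: "complex \<Rightarrow> complex \<Rightarrow> complex"
  bLM :: "complex \<Rightarrow> complex \<Rightarrow> complex"
  bYY :: "complex \<Rightarrow> complex \<Rightarrow> complex"

definition TSV_ab :: "complex \<Rightarrow> complex \<Rightarrow> alg" where
  "TSV_ab a b = \<lparr> bLL = (\<lambda>d l. d + 2*l),
                   bLY = (\<lambda>d l. d + a*l + b),
                   bLM = (\<lambda>d l. d + 2*(a-1)*l + 2*b),
                   bYY = (\<lambda>d l. d + 2*l) \<rparr>"

definition TSV_c :: "complex \<Rightarrow> alg" where
  "TSV_c c = \<lparr> bLL = (\<lambda>d l. d + 2*l),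
                bLY = (\<lambda>d l. d + 3/2*l + c),
                bLM = (\<lambda>d l. d + 2*c),
                bYY = (\<lambda>d l. (d + 2*l) * (- d - 2*c)) \<rparr>"

text \<open>A (candidate) conformal module on a type 'v: a complex scalar multiplication
  sc, the action dd of the indeterminate d (making 'v a C[d]-module), and the
  lambda-action of the generators, evaluated at lam::complex
  (act x lam v = x_lam v).  Since R is free over C[d] on L,Y,M and
  (d a)_lam = -lam a_lam, the action on generators determines everything.\<close>
record 'v cmod =
  sc  :: "complex \<Rightarrow> 'v \<Rightarrow> 'v"
  dd  :: "'v \<Rightarrow> 'v"
  act :: "gen \<Rightarrow> complex \<Rightarrow> 'v \<Rightarrow> 'v"

definition is_lin :: "(complex \<Rightarrow> 'v::ab_group_add \<Rightarrow> 'v) \<Rightarrow> (complex \<Rightarrow> 'w::ab_group_add \<Rightarrow> 'w)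
    \<Rightarrow> ('v \<Rightarrow> 'w) \<Rightarrow> bool" where
  "is_lin s1 s2 \<phi> \<longleftrightarrow> (\<forall>x y. \<phi> (x + y) = \<phi> x + \<phi> y) \<and> (\<forall>c x. \<phi> (s1 c x) = s2 c (\<phi> x))"

text \<open>Polynomiality: x_lam v lies in V[lam].
  The bracket axiom a_lam(b_mu v) - b_mu(a_lam v) = [a_lam b]_{lam+mu} v is
  imposed for the pairs (L,L),(L,Y),(L,M),(Y,Y),(Y,M),(M,M); for the reversed
  pairs it is then automatic by skew-symmetry.  ([P(d,lam) X]_{nu} = P(-nu,lam) X_nu.)\<close>
definition is_cmod :: "alg \<Rightarrow> ('v::ab_group_add) cmod \<Rightarrow> bool" where
  "is_cmod R V \<longleftrightarrow>
     vector_space (sc V) \<and>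
     is_lin (sc V) (sc V) (dd V) \<and>
     (\<forall>x l. is_lin (sc V) (sc V) (act V x l)) \<and>
     (\<forall>x v. \<exists>n (c :: nat \<Rightarrow> 'v). \<forall>l. act V x l v = (\<Sum>i\<le>n. sc V (l ^ i) (c i))) \<and>
     (\<forall>x l v. act V x l (dd V v) = dd V (act V x l v) + sc V l (act V x l v)) \<and>
     (\<forall>l m v.
        act V L l (act V L m v) - act V L m (act V L l v) = sc V (bLL R (-(l+m)) l) (act V L (l+m) v) \<and>
        act V L l (act V Y m v) - act V Y m (act V L l v) = sc V (bLY R (-(l+m)) l) (act V Y (l+m) v) \<and>
        act V L l (act V M m v) - act V M m (act V L l v) = sc V (bLM R (-(l+m)) l) (act V M (l+m) v) \<and>
        act V Y l (act V Y m v) - act V Y m (act V Y l v) = sc V (bYY R (-(l+m)) l) (act V M (l+m) v) \<and>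
        act V Y l (act V M m v) - act V M m (act V Y l v) = 0 \<and>
        act V M l (act V M m v) - act V M m (act V M l v) = 0)"

definition is_hom :: "('v::ab_group_add) cmod \<Rightarrow> ('w::ab_group_add) cmod \<Rightarrow> ('v \<Rightarrow> 'w) \<Rightarrow> bool" where
  "is_hom V W \<phi> \<longleftrightarrow> is_lin (sc V) (sc W) \<phi> \<and> (\<forall>v. \<phi> (dd V v) = dd W (\<phi> v)) \<and>
     (\<forall>x l v. \<phi> (act V x l v) = act W x l (\<phi> v))"

definition Ceta :: "complex \<Rightarrow> complex cmod" where
  "Ceta \<eta> = \<lparr> sc = (\<lambda>c x. c * x), dd = (\<lambda>x. \<eta> * x), act = (\<lambda>_ _ _. 0) \<rparr>"

text \<open>M_{alpha,beta,gamma} = C[d]v realised on complex poly (q represents q(d) v):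
  L_lam v = (d + alpha lam + beta) v, Y_lam v = gamma v, M_lam v = 0.
  M_{alpha,beta} is the case gamma = 0.\<close>
definition Mabg :: "complex \<Rightarrow> complex \<Rightarrow> complex \<Rightarrow> complex poly cmod" where
  "Mabg \<alpha> \<beta> \<gamma> = \<lparr> sc = smult, dd = (\<lambda>q. [:0, 1:] * q),
     act = (\<lambda>x l q. case x of
              L \<Rightarrow> pcompose q [:l, 1:] * [:\<alpha> * l + \<beta>, 1:]
            | Y \<Rightarrow> smult \<gamma> (pcompose q [:l, 1:])
            | M \<Rightarrow> 0) \<rparr>"

text \<open>An extension of M by C c_eta: a module E on 'v with i : C c_eta -> E,
  p : E -> M such that 0 -> C c_eta -> E -> M -> 0 is exact.\<close>
type_synonym 'v ext = "'v cmod \<times> (complex \<Rightarrow> 'v) \<times> ('v \<Rightarrow> complex poly)"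

definition is_ext :: "alg \<Rightarrow> complex \<Rightarrow> complex poly cmod \<Rightarrow> ('v::ab_group_add) ext \<Rightarrow> bool" where
  "is_ext R \<eta> Mm E \<longleftrightarrow> (case E of (V, i, p) \<Rightarrow>
     is_cmod R V \<and> is_hom (Ceta \<eta>) V i \<and> is_hom V Mm p \<and>
     inj i \<and> surj p \<and> range i = {v. p v = 0})"

definition ext_equiv :: "alg \<Rightarrow> complex \<Rightarrow> complex poly cmod \<Rightarrow> ('v::ab_group_add) ext \<Rightarrow> ('w::ab_group_add) ext \<Rightarrow> bool" where
  "ext_equiv R \<eta> Mm E E' \<longleftrightarrow> is_ext R \<eta> Mm E \<and> is_ext R \<eta> Mm E' \<and>
     (case E of (V, i, p) \<Rightarrow> case E' of (V', i', p') \<Rightarrow>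
        (\<exists>\<phi>. is_hom V V' \<phi> \<and> (\<forall>x. \<phi> (i x) = i' x) \<and> (\<forall>v. p' (\<phi> v) = p v)))"

definition dsum :: "('a::ab_group_add) cmod \<Rightarrow> ('b::ab_group_add) cmod \<Rightarrow> ('a \<times> 'b) cmod" where
  "dsum A B = \<lparr> sc = (\<lambda>c (x, y). (sc A c x, sc B c y)),
                 dd = (\<lambda>(x, y). (dd A x, dd B y)),
                 act = (\<lambda>g l (x, y). (act A g l x, act B g l y)) \<rparr>"

definition split_ext :: "complex \<Rightarrow> complex poly cmod \<Rightarrow> (complex \<times> complex poly) ext" where
  "split_ext \<eta> Mm = (dsum (Ceta \<eta>) Mm, (\<lambda>x. (x, 0)), snd)"

definition trivial_ext :: "alg \<Rightarrow> complex \<Rightarrow> complex poly cmod \<Rightarrow> ('v::ab_group_add) ext \<Rightarrow> bool" where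
  "trivial_ext R \<eta> Mm E \<longleftrightarrow> ext_equiv R \<eta> Mm E (split_ext \<eta> Mm)"

text \<open>The normal form E = C c_eta (+) C[d] v on complex x complex poly, where
  (x, q) represents x c_eta + q(d) v, with
  L_lam v = (d + alpha lam + beta) v + f(lam) c_eta,
  Y_lam v = gamma v + g(lam) c_eta,  M_lam v = h(lam) c_eta,
  extended to all of E by x_lam (q(d) v) = q(d + lam) x_lam v and x_lam c_eta = 0.\<close>
definition NF :: "complex \<Rightarrow> complex \<Rightarrow> complex \<Rightarrow> complex \<Rightarrow> complex poly \<Rightarrow> complex poly \<Rightarrow> complex poly
    \<Rightarrow> (complex \<times> complex poly) cmod" where
  "NF \<alpha> \<beta> \<gamma> \<eta> f g h = \<lparr> sc = (\<lambda>c (x, q). (c * x, smult c q)),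
     dd = (\<lambda>(x, q). (\<eta> * x, [:0, 1:] * q)),
     act = (\<lambda>z l (x, q). case z of
              L \<Rightarrow> (poly q (\<eta> + l) * poly f l, pcompose q [:l, 1:] * [:\<alpha> * l + \<beta>, 1:])
            | Y \<Rightarrow> (poly q (\<eta> + l) * poly g l, smult \<gamma> (pcompose q [:l, 1:]))
            | M \<Rightarrow> (poly q (\<eta> + l) * poly h l, 0)) \<rparr>"

definition NF_ext :: "complex \<Rightarrow> complex \<Rightarrow> complex \<Rightarrow> complex \<Rightarrow> complex poly \<Rightarrow> complex poly \<Rightarrow> complex poly
    \<Rightarrow> (complex \<times> complex poly) ext" where
  "NF_ext \<alpha> \<beta> \<gamma> \<eta> f g h = (NF \<alpha> \<beta> \<gamma> \<eta> f g h, (\<lambda>x. (x, 0)), snd)"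

definition list_ab :: "complex \<Rightarrow> complex \<Rightarrow> complex \<Rightarrow> complex \<Rightarrow> complex \<Rightarrow> complex poly \<Rightarrow> complex poly \<Rightarrow> bool" where
  "list_ab a b \<alpha> \<beta> \<eta> f g \<longleftrightarrow>
     \<comment> \<open>(a)\<close>
     (g = 0 \<and> \<beta> + \<eta> = 0 \<and>
        ((\<alpha> = 1 \<and> (\<exists>c2. c2 \<noteq> 0 \<and> f = monom c2 2)) \<or> (\<alpha> = 2 \<and> (\<exists>c3. c3 \<noteq> 0 \<and> f = monom c3 3)))) \<or>
     \<comment> \<open>(b)\<close>
     (a \<noteq> 1 \<and> b = 0 \<and> \<beta> + \<eta> = 0 \<and> \<alpha> = 1 - a \<and> (\<exists>k. k \<noteq> 0 \<and> g = [:k:]) \<and>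
        (if \<alpha> = 1 then (\<exists>c2. f = monom c2 2) else if \<alpha> = 2 then (\<exists>c3. f = monom c3 3) else f = 0)) \<or>
     \<comment> \<open>(c)\<close>
     (a \<noteq> 1 \<and> b + \<beta> + \<eta> = 0 \<and> \<beta> + \<eta> \<noteq> 0 \<and> \<alpha> = 1 - a \<and> (\<exists>k. k \<noteq> 0 \<and> g = [:k:]) \<and> f = 0) \<or>
     \<comment> \<open>(d)\<close>
     (a = 1 \<and> b \<noteq> 0 \<and> b + \<beta> + \<eta> = 0 \<and> \<alpha> = 1 \<and> (\<exists>k. k \<noteq> 0 \<and> g = smult k [:1, - 1 / b:]) \<and> f = 0)"

definition list_10 :: "complex \<Rightarrow> complex \<Rightarrow> complex \<Rightarrow> complex \<Rightarrow> complex poly \<Rightarrow> complex poly \<Rightarrow> bool" where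
  "list_10 \<alpha> \<beta> \<gamma> \<eta> f g \<longleftrightarrow> \<beta> + \<eta> = 0 \<and> \<gamma> = 0 \<and>
     ((g = 0 \<and> ((\<alpha> = 1 \<and> (\<exists>c2. c2 \<noteq> 0 \<and> f = monom c2 2)) \<or> (\<alpha> = 2 \<and> (\<exists>c3. c3 \<noteq> 0 \<and> f = monom c3 3)))) \<or>
      ((\<exists>k. k \<noteq> 0 \<and> g = monom k 1) \<and> \<alpha> = 1 \<and> (\<exists>c2. f = monom c2 2)))"

definition list_c :: "complex \<Rightarrow> complex \<Rightarrow> complex \<Rightarrow> complex \<Rightarrow> complex poly \<Rightarrow> complex poly \<Rightarrow> bool" where
  "list_c c \<alpha> \<beta> \<eta> f g \<longleftrightarrow>
     (g = 0 \<and> \<beta> + \<eta> = 0 \<and>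
        ((\<alpha> = 1 \<and> (\<exists>c2. c2 \<noteq> 0 \<and> f = monom c2 2)) \<or> (\<alpha> = 2 \<and> (\<exists>c3. c3 \<noteq> 0 \<and> f = monom c3 3)))) \<or>
     (c + \<beta> + \<eta> = 0 \<and> \<alpha> = - 1 / 2 \<and> (\<exists>k. k \<noteq> 0 \<and> g = [:k:]) \<and> f = 0)"

definition classification :: "'v::ab_group_add itself \<Rightarrow> alg \<Rightarrow> complex \<Rightarrow> complex \<Rightarrow> complex \<Rightarrow> complex
    \<Rightarrow> (complex poly \<Rightarrow> complex poly \<Rightarrow> bool) \<Rightarrow> bool" where
  "classification _ R \<alpha> \<beta> \<gamma> \<eta> lst \<longleftrightarrow>
     (let Mm = Mabg \<alpha> \<beta> \<gamma> in
     (\<forall>E :: 'v ext. is_ext R \<eta> Mm E \<longrightarrow>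
        (\<exists>f g h. ext_equiv R \<eta> Mm E (NF_ext \<alpha> \<beta> \<gamma> \<eta> f g h))) \<and>
     (\<forall>f g h. is_ext R \<eta> Mm (NF_ext \<alpha> \<beta> \<gamma> \<eta> f g h) \<longrightarrow> h = 0) \<and>
     (\<forall>E :: 'v ext. is_ext R \<eta> Mm E \<and> \<not> trivial_ext R \<eta> Mm E \<longrightarrow>
        (\<exists>f g. lst f g \<and> ext_equiv R \<eta> Mm E (NF_ext \<alpha> \<beta> \<gamma> \<eta> f g 0))) \<and>
     ((\<exists>f g h. is_ext R \<eta> Mm (NF_ext \<alpha> \<beta> \<gamma> \<eta> f g h) \<and>
               \<not> trivial_ext R \<eta> Mm (NF_ext \<alpha> \<beta> \<gamma> \<eta> f g h))
        \<longleftrightarrow> (\<exists>f g. lst f g)))"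

end

theory Submission
  imports Defs
begin

lemma additive_facts:
  assumes add: "\<forall>a b. \<phi> (a+b) = \<phi> a + \<phi> b"
  shows "\<phi> 0 = (0::'b::ab_group_add)" "\<phi> (a - b) = \<phi> a - \<phi> b" "\<phi> (-a) = - \<phi> a"
    "\<phi> (\<Sum>i\<le>n. F i) = (\<Sum>i\<le>(n::nat). \<phi> (F i :: 'a::ab_group_add))"
proof -
  have z: "\<phi> 0 = 0" using add[rule_format, of 0 0] by simp
  show "\<phi> 0 = 0" by (rule z)
  have "\<phi> a = \<phi> (a - b) + \<phi> b" using add[rule_format, of "a-b" b] by simp
  then show "\<phi> (a - b) = \<phi> a - \<phi> b" by (simp add: algebra_simps)
  have "0 = \<phi> (-a) + \<phi> a" using add[rule_format, of "-a" a] z by simp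
  then show "\<phi> (-a) = - \<phi> a" by (simp add: eq_neg_iff_add_eq_0 add.commute)
  show "\<phi> (\<Sum>i\<le>n. F i) = (\<Sum>i\<le>n. \<phi> (F i))"
    by (induction n) (simp_all add: add)
qed

lemma transport:
  fixes V :: "'a::ab_group_add cmod" and W :: "'b::ab_group_add cmod"
  assumes cm: "is_cmod R V" and bj: "bij \<phi>"
    and add: "\<forall>a b. \<phi> (a+b) = \<phi> a + \<phi> b"
    and scm: "\<forall>c a. \<phi> (sc V c a) = sc W c (\<phi> a)"
    and ddm: "\<forall>a. \<phi> (dd V a) = dd W (\<phi> a)"
    and acm: "\<forall>x l a. \<phi> (act V x l a) = act W x l (\<phi> a)"
  shows "is_cmod R W"
proof -
  have sur: "\<And>w. \<exists>a. w = \<phi> a" using bj bij_is_surj surjD by metis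
  note af = additive_facts[OF add]
  note C = cm[unfolded is_cmod_def]
  have vs: "vector_space (sc V)" using C by blast
  have ldd: "is_lin (sc V) (sc V) (dd V)" using C by blast
  have lact: "\<And>x l. is_lin (sc V) (sc V) (act V x l)" using C by blast
  have pol: "\<And>x v. \<exists>n (c :: nat \<Rightarrow> 'a). \<forall>l. act V x l v = (\<Sum>i\<le>n. sc V (l ^ i) (c i))" using C by blast
  have dcomp: "\<And>x l v. act V x l (dd V v) = dd V (act V x l v) + sc V l (act V x l v)" using C by blast
  have br: "\<And>l m v. act V L l (act V L m v) - act V L m (act V L l v) = sc V (bLL R (-(l+m)) l) (act V L (l+m) v) \<and>
        act V L l (act V Y m v) - act V Y m (act V L l v) = sc V (bLY R (-(l+m)) l) (act V Y (l+m) v) \<and>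
        act V L l (act V M m v) - act V M m (act V L l v) = sc V (bLM R (-(l+m)) l) (act V M (l+m) v) \<and>
        act V Y l (act V Y m v) - act V Y m (act V Y l v) = sc V (bYY R (-(l+m)) l) (act V M (l+m) v) \<and>
        act V Y l (act V M m v) - act V M m (act V Y l v) = 0 \<and>
        act V M l (act V M m v) - act V M m (act V M l v) = 0" using C by blast
  have "vector_space (sc W)"
    unfolding vector_space_def
  proof (intro conjI allI)
    fix a b :: complex and x y :: 'b
    obtain x' y' where xy: "x = \<phi> x'" "y = \<phi> y'" using sur by metis
    show "sc W a (x + y) = sc W a x + sc W a y"
      using vs unfolding vector_space_def xy by (metis add scm)
    show "sc W (a + b) x = sc W a x + sc W b x"
      using vs unfolding vector_space_def xy by (metis add scm)
    show "sc W a (sc W b x) = sc W (a * b) x"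
      using vs unfolding vector_space_def xy by (metis scm)
    show "sc W 1 x = x"
      using vs unfolding vector_space_def xy by (metis scm)
  qed
  moreover have "is_lin (sc W) (sc W) (dd W)"
    unfolding is_lin_def
  proof (intro conjI allI)
    fix c x y
    obtain x' y' where xy: "x = \<phi> x'" "y = \<phi> y'" using sur by metis
    show "dd W (x + y) = dd W x + dd W y" using ldd unfolding is_lin_def xy by (metis add ddm)
    show "dd W (sc W c x) = sc W c (dd W x)" using ldd unfolding is_lin_def xy by (metis scm ddm)
  qed
  moreover have "\<forall>z l. is_lin (sc W) (sc W) (act W z l)"
    unfolding is_lin_def
  proof (intro conjI allI)
    fix c x y z l
    obtain x' y' where xy: "x = \<phi> x'" "y = \<phi> y'" using sur by metis
    show "act W z l (x + y) = act W z l x + act W z l y"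
      using lact[of z l] unfolding is_lin_def xy by (metis add acm)
    show "act W z l (sc W c x) = sc W c (act W z l x)"
      using lact[of z l] unfolding is_lin_def xy by (metis scm acm)
  qed
  moreover have "\<forall>x w. \<exists>n (c :: nat \<Rightarrow> 'b). \<forall>l. act W x l w = (\<Sum>i\<le>n. sc W (l ^ i) (c i))"
  proof (intro allI)
    fix x w
    obtain w' where w: "w = \<phi> w'" using sur by metis
    obtain n c where nc: "\<forall>l. act V x l w' = (\<Sum>i\<le>n. sc V (l ^ i) (c i))" using pol by metis
    have "\<forall>l. act W x l w = (\<Sum>i\<le>n. sc W (l ^ i) (\<phi> (c i)))"
    proof
      fix l
      have "act W x l w = \<phi> (act V x l w')" using w acm by simp
      also have "\<dots> = (\<Sum>i\<le>n. \<phi> (sc V (l ^ i) (c i)))" using nc af(4) by simp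
      finally show "act W x l w = (\<Sum>i\<le>n. sc W (l ^ i) (\<phi> (c i)))" using scm by simp
    qed
    then show "\<exists>n (c :: nat \<Rightarrow> 'b). \<forall>l. act W x l w = (\<Sum>i\<le>n. sc W (l ^ i) (c i))"
      by (rule_tac x=n in exI, rule_tac x="\<lambda>i. \<phi> (c i)" in exI, simp)
  qed
  moreover have "\<forall>x l w. act W x l (dd W w) = dd W (act W x l w) + sc W l (act W x l w)"
  proof (intro allI)
    fix x l w
    obtain w' where w: "w = \<phi> w'" using sur by metis
    show "act W x l (dd W w) = dd W (act W x l w) + sc W l (act W x l w)"
      using dcomp[of x l w'] unfolding w by (metis add ddm acm scm)
  qed
  moreover have "\<forall>l m w.
        act W L l (act W L m w) - act W L m (act W L l w) = sc W (bLL R (-(l+m)) l) (act W L (l+m) w) \<and>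
        act W L l (act W Y m w) - act W Y m (act W L l w) = sc W (bLY R (-(l+m)) l) (act W Y (l+m) w) \<and>
        act W L l (act W M m w) - act W M m (act W L l w) = sc W (bLM R (-(l+m)) l) (act W M (l+m) w) \<and>
        act W Y l (act W Y m w) - act W Y m (act W Y l w) = sc W (bYY R (-(l+m)) l) (act W M (l+m) w) \<and>
        act W Y l (act W M m w) - act W M m (act W Y l w) = 0 \<and>
        act W M l (act W M m w) - act W M m (act W M l w) = 0"
  proof (intro allI)
    fix l m w
    obtain w' where w: "w = \<phi> w'" using sur by metis
    have e: "\<And>x y. act W x l (act W y m w) - act W y m (act W x l w) = \<phi> (act V x l (act V y m w') - act V y m (act V x l w'))"
      unfolding w by (simp add: af(2) acm)
    show "act W L l (act W L m w) - act W L m (act W L l w) = sc W (bLL R (-(l+m)) l) (act W L (l+m) w) \<and>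
        act W L l (act W Y m w) - act W Y m (act W L l w) = sc W (bLY R (-(l+m)) l) (act W Y (l+m) w) \<and>
        act W L l (act W M m w) - act W M m (act W L l w) = sc W (bLM R (-(l+m)) l) (act W M (l+m) w) \<and>
        act W Y l (act W Y m w) - act W Y m (act W Y l w) = sc W (bYY R (-(l+m)) l) (act W M (l+m) w) \<and>
        act W Y l (act W M m w) - act W M m (act W Y l w) = 0 \<and>
        act W M l (act W M m w) - act W M m (act W M l w) = 0"
      unfolding e using br[of l m w'] by (simp add: af(1) w acm scm)
  qed
  ultimately show ?thesis unfolding is_cmod_def by blast
qed

lemma NF_simps:
  "sc (NF \<alpha> \<beta> \<gamma> \<eta> f g h) c w = (c * fst w, smult c (snd w))"
  "dd (NF \<alpha> \<beta> \<gamma> \<eta> f g h) w = (\<eta> * fst w, [:0,1:] * snd w)"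
  "act (NF \<alpha> \<beta> \<gamma> \<eta> f g h) L l w = (poly (snd w) (\<eta>+l) * poly f l, pcompose (snd w) [:l,1:] * [:\<alpha>*l+\<beta>,1:])"
  "act (NF \<alpha> \<beta> \<gamma> \<eta> f g h) Y l w = (poly (snd w) (\<eta>+l) * poly g l, smult \<gamma> (pcompose (snd w) [:l,1:]))"
  "act (NF \<alpha> \<beta> \<gamma> \<eta> f g h) M l w = (poly (snd w) (\<eta>+l) * poly h l, 0)"
  by (cases w; simp add: NF_def)+

lemma NF_act_zero: "act (NF \<alpha> \<beta> \<gamma> \<eta> f g h) z l (x, 0) = (0, 0)"
  by (cases z) (simp_all add: NF_simps)

lemma Mabg_simps:
  "sc (Mabg \<alpha> \<beta> \<gamma>) = smult"
  "dd (Mabg \<alpha> \<beta> \<gamma>) q = [:0,1:] * q"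
  "act (Mabg \<alpha> \<beta> \<gamma>) L l q = pcompose q [:l,1:] * [:\<alpha>*l+\<beta>,1:]"
  "act (Mabg \<alpha> \<beta> \<gamma>) Y l q = smult \<gamma> (pcompose q [:l,1:])"
  "act (Mabg \<alpha> \<beta> \<gamma>) M l q = 0"
  by (simp_all add: Mabg_def)

lemma Ceta_simps:
  "sc (Ceta \<eta>) c x = c * x" "dd (Ceta \<eta>) x = \<eta> * x" "act (Ceta \<eta>) z l x = 0"
  by (simp_all add: Ceta_def)

lemma NF_ext_iff:
  "is_ext R \<eta> (Mabg \<alpha> \<beta> \<gamma>) (NF_ext \<alpha> \<beta> \<gamma> \<eta> f g h) \<longleftrightarrow> is_cmod R (NF \<alpha> \<beta> \<gamma> \<eta> f g h)"
proof -
  have "is_hom (Ceta \<eta>) (NF \<alpha> \<beta> \<gamma> \<eta> f g h) (\<lambda>x. (x, 0))"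
    unfolding is_hom_def is_lin_def by (simp add: NF_simps Ceta_simps NF_act_zero)
  moreover have "is_hom (NF \<alpha> \<beta> \<gamma> \<eta> f g h) (Mabg \<alpha> \<beta> \<gamma>) snd"
    unfolding is_hom_def is_lin_def
    by (auto simp add: NF_simps Mabg_simps split: gen.split) (case_tac x; simp add: NF_simps Mabg_simps)
  moreover have "inj (\<lambda>x::complex. (x, 0::complex poly))" by (simp add: inj_on_def)
  moreover have "surj (snd :: complex \<times> complex poly \<Rightarrow> _)" by (metis snd_conv surjI)
  moreover have "range (\<lambda>x::complex. (x, 0::complex poly)) = {v. snd v = 0}" by force
  ultimately show ?thesis unfolding is_ext_def NF_ext_def by simp
qed

lemma split_NF: "split_ext \<eta> (Mabg \<alpha> \<beta> \<gamma>) = NF_ext \<alpha> \<beta> \<gamma> \<eta> 0 0 0"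
  unfolding split_ext_def NF_ext_def dsum_def NF_def Ceta_def Mabg_def
  by (auto simp: fun_eq_iff split: gen.split)

lemma hom_comp:
  assumes "is_hom V W \<phi>" "is_hom W U \<psi>" shows "is_hom V U (\<psi> \<circ> \<phi>)"
  using assms unfolding is_hom_def is_lin_def by simp

lemma ext_equiv_trans:
  assumes "ext_equiv R \<eta> Mm E1 E2" "ext_equiv R \<eta> Mm E2 E3"
  shows "ext_equiv R \<eta> Mm E1 E3"
proof -
  obtain V1 i1 p1 where e1: "E1 = (V1, i1, p1)" by (cases E1) auto
  obtain V2 i2 p2 where e2: "E2 = (V2, i2, p2)" by (cases E2) auto
  obtain V3 i3 p3 where e3: "E3 = (V3, i3, p3)" by (cases E3) auto
  from assms obtain \<phi> \<psi> where
    "is_hom V1 V2 \<phi>" "\<forall>x. \<phi> (i1 x) = i2 x" "\<forall>v. p2 (\<phi> v) = p1 v"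
    "is_hom V2 V3 \<psi>" "\<forall>x. \<psi> (i2 x) = i3 x" "\<forall>v. p3 (\<psi> v) = p2 v"
    unfolding ext_equiv_def e1 e2 e3 by auto
  then have "is_hom V1 V3 (\<psi> \<circ> \<phi>) \<and> (\<forall>x. (\<psi> \<circ> \<phi>) (i1 x) = i3 x) \<and> (\<forall>v. p3 ((\<psi> \<circ> \<phi>) v) = p1 v)"
    using hom_comp by auto
  then show ?thesis using assms unfolding ext_equiv_def e1 e2 e3 by auto
qed

lemma shift:
  assumes ex: "is_ext R \<eta> (Mabg \<alpha> \<beta> \<gamma>) (NF_ext \<alpha> \<beta> \<gamma> \<eta> f g h)"
  shows "ext_equiv R \<eta> (Mabg \<alpha> \<beta> \<gamma>) (NF_ext \<alpha> \<beta> \<gamma> \<eta> f g h)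
           (NF_ext \<alpha> \<beta> \<gamma> \<eta> (f + smult t [:\<eta>+\<beta>, \<alpha>:]) (g + [:t*\<gamma>:]) h)"
proof -
  define \<phi> :: "complex \<times> complex poly \<Rightarrow> complex \<times> complex poly" where
    "\<phi> = (\<lambda>w. (fst w + t * poly (snd w) \<eta>, snd w))"
  have bj: "bij \<phi>"
  proof (rule bijI)
    show "inj \<phi>" unfolding \<phi>_def inj_on_def by (auto simp: prod_eq_iff)
    show "surj \<phi>"
    proof (rule surjI)
      fix y show "\<phi> (fst y - t * poly (snd y) \<eta>, snd y) = y" unfolding \<phi>_def by simp
    qed
  qed
  have add: "\<forall>a b. \<phi> (a+b) = \<phi> a + \<phi> b" unfolding \<phi>_def by (simp add: algebra_simps)
  have scm: "\<forall>c a. \<phi> (sc (NF \<alpha> \<beta> \<gamma> \<eta> f g h) c a) = sc (NF \<alpha> \<beta> \<gamma> \<eta> (f + smult t [:\<eta>+\<beta>, \<alpha>:]) (g + [:t*\<gamma>:]) h) c (\<phi> a)"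
    unfolding \<phi>_def by (simp add: NF_simps algebra_simps)
  have ddm: "\<forall>a. \<phi> (dd (NF \<alpha> \<beta> \<gamma> \<eta> f g h) a) = dd (NF \<alpha> \<beta> \<gamma> \<eta> (f + smult t [:\<eta>+\<beta>, \<alpha>:]) (g + [:t*\<gamma>:]) h) (\<phi> a)"
    unfolding \<phi>_def by (simp add: NF_simps algebra_simps)
  have acm: "\<forall>x l a. \<phi> (act (NF \<alpha> \<beta> \<gamma> \<eta> f g h) x l a) = act (NF \<alpha> \<beta> \<gamma> \<eta> (f + smult t [:\<eta>+\<beta>, \<alpha>:]) (g + [:t*\<gamma>:]) h) x l (\<phi> a)"
  proof (intro allI)
    fix x l a show "\<phi> (act (NF \<alpha> \<beta> \<gamma> \<eta> f g h) x l a) = act (NF \<alpha> \<beta> \<gamma> \<eta> (f + smult t [:\<eta>+\<beta>, \<alpha>:]) (g + [:t*\<gamma>:]) h) x l (\<phi> a)"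
      unfolding \<phi>_def by (cases x) (simp_all add: NF_simps poly_pcompose algebra_simps)
  qed
  have cm: "is_cmod R (NF \<alpha> \<beta> \<gamma> \<eta> f g h)" using ex NF_ext_iff by blast
  have cm2: "is_cmod R (NF \<alpha> \<beta> \<gamma> \<eta> (f + smult t [:\<eta>+\<beta>, \<alpha>:]) (g + [:t*\<gamma>:]) h)"
    by (rule transport[OF cm bj add scm ddm acm])
  have "is_hom (NF \<alpha> \<beta> \<gamma> \<eta> f g h) (NF \<alpha> \<beta> \<gamma> \<eta> (f + smult t [:\<eta>+\<beta>, \<alpha>:]) (g + [:t*\<gamma>:]) h) \<phi>"
    unfolding is_hom_def is_lin_def using add scm ddm acm by blast
  then show ?thesis using ex cm2 NF_ext_iff unfolding ext_equiv_def NF_ext_def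
    by (auto simp: \<phi>_def)
qed

lemma triv_iff:
  assumes ex: "is_ext R \<eta> (Mabg \<alpha> \<beta> \<gamma>) (NF_ext \<alpha> \<beta> \<gamma> \<eta> f g h)"
  shows "trivial_ext R \<eta> (Mabg \<alpha> \<beta> \<gamma>) (NF_ext \<alpha> \<beta> \<gamma> \<eta> f g h) \<longleftrightarrow>
           (\<exists>t. f = smult t [:\<eta>+\<beta>, \<alpha>:] \<and> g = [:t*\<gamma>:] \<and> h = 0)"
proof
  assume "\<exists>t. f = smult t [:\<eta>+\<beta>, \<alpha>:] \<and> g = [:t*\<gamma>:] \<and> h = 0"
  then obtain t where t: "f = smult t [:\<eta>+\<beta>, \<alpha>:]" "g = [:t*\<gamma>:]" "h = 0" by blast
  have "ext_equiv R \<eta> (Mabg \<alpha> \<beta> \<gamma>) (NF_ext \<alpha> \<beta> \<gamma> \<eta> f g h)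
           (NF_ext \<alpha> \<beta> \<gamma> \<eta> (f + smult (-t) [:\<eta>+\<beta>, \<alpha>:]) (g + [:(-t)*\<gamma>:]) h)"
    by (rule shift[OF ex])
  moreover have "f + smult (-t) [:\<eta>+\<beta>, \<alpha>:] = 0" "g + [:(-t)*\<gamma>:] = 0" using t by simp_all
  ultimately show "trivial_ext R \<eta> (Mabg \<alpha> \<beta> \<gamma>) (NF_ext \<alpha> \<beta> \<gamma> \<eta> f g h)"
    unfolding trivial_ext_def split_NF using t by simp
next
  assume "trivial_ext R \<eta> (Mabg \<alpha> \<beta> \<gamma>) (NF_ext \<alpha> \<beta> \<gamma> \<eta> f g h)"
  then obtain \<phi> where hom: "is_hom (NF \<alpha> \<beta> \<gamma> \<eta> f g h) (NF \<alpha> \<beta> \<gamma> \<eta> 0 0 0) \<phi>"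
    and ii: "\<forall>x. \<phi> (x, 0) = (x, 0)" and pp: "\<forall>v. snd (\<phi> v) = snd v"
    unfolding trivial_ext_def split_NF ext_equiv_def NF_ext_def by auto
  define N where "N = NF \<alpha> \<beta> \<gamma> \<eta> f g h"
  define N0 where "N0 = NF \<alpha> \<beta> \<gamma> \<eta> 0 0 0"
  have ad: "\<And>a b. \<phi> (a + b) = \<phi> a + \<phi> b" and scm: "\<And>c a. \<phi> (sc N c a) = sc N0 c (\<phi> a)"
    and ddm: "\<And>a. \<phi> (dd N a) = dd N0 (\<phi> a)" and acm: "\<And>x l a. \<phi> (act N x l a) = act N0 x l (\<phi> a)"
    using hom unfolding is_hom_def is_lin_def N_def N0_def by auto
  define s where "s = fst (\<phi> (0, 1))"
  have p01: "\<phi> (0, 1) = (s, 1)" using pp[rule_format, of "(0,1)"] unfolding s_def by (simp add: prod_eq_iff)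
  have "\<forall>l. poly f l = poly (smult (-s) [:\<eta>+\<beta>, \<alpha>:]) l"
  proof
    fix l
    have e: "act N L l (0, 1) = (poly f l, 0) + (sc N (\<alpha>*l+\<beta>) (0,1) + dd N (0,1))"
      unfolding N_def by (simp add: NF_simps pcompose_1)
    have "\<phi> (act N L l (0, 1)) = (poly f l, 0) + (sc N0 (\<alpha>*l+\<beta>) (s,1) + dd N0 (s,1))"
      by (simp only: e ad scm ddm ii p01)
    moreover have "\<phi> (act N L l (0, 1)) = act N0 L l (s, 1)" using acm p01 by simp
    ultimately have "fst (act N0 L l (s, 1)) = fst ((poly f l, 0) + (sc N0 (\<alpha>*l+\<beta>) (s,1) + dd N0 (s,1)))" by simp
    then show "poly f l = poly (smult (-s) [:\<eta>+\<beta>, \<alpha>:]) l" unfolding N0_def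
      by (simp add: NF_simps algebra_simps add_eq_0_iff)
  qed
  then have fe: "f = smult (-s) [:\<eta>+\<beta>, \<alpha>:]" using poly_eq_poly_eq_iff by blast
  have "\<forall>l. poly g l = poly [:(-s)*\<gamma>:] l"
  proof
    fix l
    have e: "act N Y l (0, 1) = (poly g l, 0) + sc N \<gamma> (0,1)"
      unfolding N_def by (simp add: NF_simps pcompose_1)
    have "\<phi> (act N Y l (0, 1)) = (poly g l, 0) + sc N0 \<gamma> (s,1)"
      by (simp only: e ad scm ii p01)
    moreover have "\<phi> (act N Y l (0, 1)) = act N0 Y l (s, 1)" using acm p01 by simp
    ultimately have "fst (act N0 Y l (s, 1)) = fst ((poly g l, 0) + sc N0 \<gamma> (s,1))" by simp
    then show "poly g l = poly [:(-s)*\<gamma>:] l" unfolding N0_def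
      by (simp add: NF_simps algebra_simps add_eq_0_iff)
  qed
  then have ge: "g = [:(-s)*\<gamma>:]" using poly_eq_poly_eq_iff by blast
  have "\<forall>l. poly h l = poly 0 l"
  proof
    fix l
    have e: "act N M l (0, 1) = (poly h l, 0)"
      unfolding N_def by (simp add: NF_simps pcompose_1)
    have "\<phi> (act N M l (0, 1)) = (poly h l, 0)" by (simp only: e ii)
    moreover have "\<phi> (act N M l (0, 1)) = act N0 M l (s, 1)" using acm p01 by simp
    ultimately show "poly h l = poly 0 l" unfolding N0_def by (simp add: NF_simps)
  qed
  then have "h = 0" using poly_eq_poly_eq_iff by blast
  then show "\<exists>t. f = smult t [:\<eta>+\<beta>, \<alpha>:] \<and> g = [:t*\<gamma>:] \<and> h = 0" using fe ge by blast
qed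

lemma NF_eqs:
  assumes "is_cmod R (NF \<alpha> \<beta> \<gamma> \<eta> f g h)"
  shows "\<And>l m. (\<eta>+\<beta>+l+\<alpha>*m) * poly f l - (\<eta>+\<beta>+m+\<alpha>*l) * poly f m = bLL R (-(l+m)) l * poly f (l+m)"
    "\<And>l m. \<gamma> * poly f l - (\<eta>+\<beta>+m+\<alpha>*l) * poly g m = bLY R (-(l+m)) l * poly g (l+m)"
    "\<And>l m. - ((\<eta>+\<beta>+m+\<alpha>*l) * poly h m) = bLM R (-(l+m)) l * poly h (l+m)"
    "\<And>l m. \<gamma> * (poly g l - poly g m) = bYY R (-(l+m)) l * poly h (l+m)"
    "\<And>m. \<gamma> * poly h m = 0"
proof -
  note br = assms[unfolded is_cmod_def, THEN conjunct2, THEN conjunct2, THEN conjunct2,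
      THEN conjunct2, THEN conjunct2, rule_format, of _ _ "(0,1)"]
  fix l m
  show "(\<eta>+\<beta>+l+\<alpha>*m) * poly f l - (\<eta>+\<beta>+m+\<alpha>*l) * poly f m = bLL R (-(l+m)) l * poly f (l+m)"
    using arg_cong[OF br[of l m, THEN conjunct1], of fst]
    by (simp add: NF_simps poly_pcompose pcompose_1 algebra_simps)
  show "\<gamma> * poly f l - (\<eta>+\<beta>+m+\<alpha>*l) * poly g m = bLY R (-(l+m)) l * poly g (l+m)"
    using arg_cong[OF br[of l m, THEN conjunct2, THEN conjunct1], of fst]
    by (simp add: NF_simps poly_pcompose pcompose_1 algebra_simps)
  show "- ((\<eta>+\<beta>+m+\<alpha>*l) * poly h m) = bLM R (-(l+m)) l * poly h (l+m)"
    using arg_cong[OF br[of l m, THEN conjunct2, THEN conjunct2, THEN conjunct1], of fst]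
    by (simp add: NF_simps poly_pcompose pcompose_1 algebra_simps)
  show "\<gamma> * (poly g l - poly g m) = bYY R (-(l+m)) l * poly h (l+m)"
    using arg_cong[OF br[of l m, THEN conjunct2, THEN conjunct2, THEN conjunct2, THEN conjunct1], of fst]
    by (simp add: NF_simps poly_pcompose pcompose_1 algebra_simps)
next
  note br = assms[unfolded is_cmod_def, THEN conjunct2, THEN conjunct2, THEN conjunct2,
      THEN conjunct2, THEN conjunct2, rule_format, of _ _ "(0,1)"]
  fix m
  show "\<gamma> * poly h m = 0"
    using arg_cong[OF br[of 0 m, THEN conjunct2, THEN conjunct2, THEN conjunct2, THEN conjunct2, THEN conjunct1], of fst]
    by (simp add: NF_simps poly_pcompose pcompose_1 algebra_simps)
qed

definition scp :: "complex \<Rightarrow> complex \<times> complex poly \<Rightarrow> complex \<times> complex poly" where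
  "scp c w = (c * fst w, smult c (snd w))"

definition PF :: "(complex \<Rightarrow> complex \<times> complex poly) \<Rightarrow> bool" where
  "PF F \<longleftrightarrow> (\<exists>n c. \<forall>l. F l = (\<Sum>i\<le>n. scp (l^i) (c i)))"

lemma scp_add: "scp c (a + b) = scp c a + scp c b" by (simp add: scp_def algebra_simps smult_add_right)
lemma scp_zero[simp]: "scp c 0 = 0" by (simp add: scp_def zero_prod_def)
lemma scp_scp: "scp c (scp d a) = scp (c*d) a" by (simp add: scp_def)
lemma scp_one: "scp 1 a = a" by (simp add: scp_def)

lemma PF_ext:
  assumes "\<forall>l. F l = (\<Sum>i\<le>n. scp (l^i) (c i))" "n \<le> N"
  shows "\<forall>l. F l = (\<Sum>i\<le>N. scp (l^i) (if i \<le> n then c i else 0))"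
proof
  fix l
  have "(\<Sum>i\<le>N. scp (l^i) (if i \<le> n then c i else 0)) = (\<Sum>i\<le>n. scp (l^i) (if i \<le> n then c i else 0))"
    by (rule sum.mono_neutral_right) (use assms(2) in auto)
  also have "\<dots> = (\<Sum>i\<le>n. scp (l^i) (c i))" by simp
  finally show "F l = (\<Sum>i\<le>N. scp (l^i) (if i \<le> n then c i else 0))" using assms(1) by simp
qed

lemma PF_add: assumes "PF F" "PF G" shows "PF (\<lambda>l. F l + G l)"
proof -
  obtain n1 c1 where 1: "\<forall>l. F l = (\<Sum>i\<le>n1. scp (l^i) (c1 i))" using assms(1) PF_def by blast
  obtain n2 c2 where 2: "\<forall>l. G l = (\<Sum>i\<le>n2. scp (l^i) (c2 i))" using assms(2) PF_def by blast
  define N where "N = max n1 n2"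
  note e1 = PF_ext[OF 1, of N] and e2 = PF_ext[OF 2, of N]
  have "\<forall>l. F l + G l = (\<Sum>i\<le>N. scp (l^i) ((if i \<le> n1 then c1 i else 0) + (if i \<le> n2 then c2 i else 0)))"
    using e1 e2 by (simp add: N_def scp_add sum.distrib)
  then show ?thesis unfolding PF_def by - (rule exI, rule exI, assumption)
qed

lemma PF_const: "PF (\<lambda>l. w)"
  unfolding PF_def by (rule exI[of _ 0], rule exI[of _ "\<lambda>i. w"]) (simp add: scp_one)

lemma scp_sum: "scp c (\<Sum>i\<le>n. F i) = (\<Sum>i\<le>(n::nat). scp c (F i))"
  by (induction n) (simp_all add: scp_add)

lemma PF_sc: assumes "PF F" shows "PF (\<lambda>l. scp l (F l))"
proof -
  obtain n c where 1: "\<forall>l. F l = (\<Sum>i\<le>n. scp (l^i) (c i))" using assms PF_def by blast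
  have "\<forall>l. scp l (F l) = (\<Sum>i\<le>Suc n. scp (l^i) (case i of 0 \<Rightarrow> 0 | Suc j \<Rightarrow> c j))"
    using 1 by (simp add: scp_sum scp_scp sum.atMost_Suc_shift del: sum.atMost_Suc)
  then show ?thesis unfolding PF_def by - (rule exI, rule exI, assumption)
qed

lemma PF_lin:
  assumes "PF F" "\<forall>a b. T (a+b) = T a + T b" "\<forall>c a. T (scp c a) = scp c (T a)"
  shows "PF (\<lambda>l. T (F l))"
proof -
  obtain n c where 1: "\<forall>l. F l = (\<Sum>i\<le>n. scp (l^i) (c i))" using assms PF_def by blast
  have "\<forall>l. T (F l) = (\<Sum>i\<le>n. scp (l^i) (T (c i)))"
    using 1 additive_facts(4)[OF assms(2)] assms(3)[rule_format] by simp
  then show ?thesis unfolding PF_def by - (rule exI, rule exI, assumption)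
qed

lemma PF_poly: "PF (\<lambda>l. (poly p l, 0))"
proof (induction p)
  case 0
  then show ?case using PF_const[of "(0,0)"] by simp
next
  case (pCons a p)
  have "(\<lambda>l. (poly (pCons a p) l, 0)) = (\<lambda>l. (a, 0) + scp l (poly p l, 0))"
    by (simp add: scp_def fun_eq_iff)
  then show ?case using PF_add[OF PF_const PF_sc[OF pCons.IH]] by simp
qed

lemma PF_pc: "PF (\<lambda>l. (0, pcompose q [:l,1:]))"
proof (induction q)
  case 0
  then show ?case using PF_const[of "(0,0)"] by simp
next
  case (pCons a q)
  define T :: "complex \<times> complex poly \<Rightarrow> complex \<times> complex poly" where "T = (\<lambda>w. (0, [:0,1:] * snd w))"
  have "(\<lambda>l. (0, pcompose (pCons a q) [:l,1:])) =
        (\<lambda>l. (0, [:a:]) + (scp l (0, pcompose q [:l,1:]) + T (0, pcompose q [:l,1:])))"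
    by (simp add: scp_def fun_eq_iff T_def pcompose_pCons algebra_simps)
  moreover have "PF (\<lambda>l. T (0, pcompose q [:l,1:]))"
    by (rule PF_lin[OF pCons.IH]) (simp_all add: T_def scp_def algebra_simps smult_add_right)
  ultimately show ?case using PF_add[OF PF_const PF_add[OF PF_sc[OF pCons.IH]]] by simp
qed

lemma PF_NF: "PF (\<lambda>l. act (NF \<alpha> \<beta> \<gamma> \<eta> f g h) z l w)"
proof -
  have P1: "\<And>p. PF (\<lambda>l. (poly (pcompose (snd w) [:\<eta>,1:] * p) l, 0))" by (rule PF_poly)
  have e1: "\<And>p l. poly (pcompose (snd w) [:\<eta>,1:] * p) l = poly (snd w) (\<eta>+l) * poly p l"
    by (simp add: poly_pcompose add.commute)
  note Q = PF_pc[of "snd w"]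
  show ?thesis
  proof (cases z)
    case L
    define T1 :: "complex \<times> complex poly \<Rightarrow> complex \<times> complex poly" where "T1 = (\<lambda>w. (0, smult \<alpha> (snd w)))"
    define T2 :: "complex \<times> complex poly \<Rightarrow> complex \<times> complex poly" where "T2 = (\<lambda>w. (0, smult \<beta> (snd w)))"
    define T3 :: "complex \<times> complex poly \<Rightarrow> complex \<times> complex poly" where "T3 = (\<lambda>w. (0, [:0,1:] * snd w))"
    have a: "PF (\<lambda>l. T1 (scp l (0, pcompose (snd w) [:l,1:])))"
      by (rule PF_lin[OF PF_sc[OF Q]]) (simp_all add: T1_def scp_def algebra_simps smult_add_right)
    have b: "PF (\<lambda>l. T2 (0, pcompose (snd w) [:l,1:]))"
      by (rule PF_lin[OF Q]) (simp_all add: T2_def scp_def algebra_simps smult_add_right)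
    have c: "PF (\<lambda>l. T3 (0, pcompose (snd w) [:l,1:]))"
      by (rule PF_lin[OF Q]) (simp_all add: T3_def scp_def algebra_simps smult_add_right)
    have "(\<lambda>l. act (NF \<alpha> \<beta> \<gamma> \<eta> f g h) z l w) = (\<lambda>l. (poly (pcompose (snd w) [:\<eta>,1:] * f) l, 0) +
       (T1 (scp l (0, pcompose (snd w) [:l,1:])) + (T2 (0, pcompose (snd w) [:l,1:]) + T3 (0, pcompose (snd w) [:l,1:]))))"
      unfolding fun_eq_iff L NF_simps e1 T1_def T2_def T3_def scp_def
      by (simp add: algebra_simps smult_add_left)
    then show ?thesis using PF_add[OF P1 PF_add[OF a PF_add[OF b c]]] by simp
  next
    case Y
    define T1 :: "complex \<times> complex poly \<Rightarrow> complex \<times> complex poly" where "T1 = (\<lambda>w. (0, smult \<gamma> (snd w)))"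
    have b: "PF (\<lambda>l. T1 (0, pcompose (snd w) [:l,1:]))"
      by (rule PF_lin[OF Q]) (simp_all add: T1_def scp_def algebra_simps smult_add_right)
    have "(\<lambda>l. act (NF \<alpha> \<beta> \<gamma> \<eta> f g h) z l w) = (\<lambda>l. (poly (pcompose (snd w) [:\<eta>,1:] * g) l, 0) +
       T1 (0, pcompose (snd w) [:l,1:]))"
      unfolding fun_eq_iff Y NF_simps e1 T1_def by simp
    then show ?thesis using PF_add[OF P1 b] by simp
  next
    case M
    have "(\<lambda>l. act (NF \<alpha> \<beta> \<gamma> \<eta> f g h) z l w) = (\<lambda>l. (poly (pcompose (snd w) [:\<eta>,1:] * h) l, 0))"
      unfolding fun_eq_iff M NF_simps e1 by simp
    then show ?thesis using P1 by simp
  qed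
qed

lemma pext:
  fixes p q :: "complex poly"
  assumes "\<And>x. poly p x = poly q x" shows "p = q"
proof -
  have "poly p = poly q" by (rule ext) (rule assms)
  then show ?thesis by (rule iffD1[OF poly_eq_poly_eq_iff])
qed

lemma NF_suff:
  assumes bll: "\<And>d l. bLL R d l = d + 2*l"
    and LL: "\<And>l m. (\<eta>+\<beta>+l+\<alpha>*m) * poly f l - (\<eta>+\<beta>+m+\<alpha>*l) * poly f m = (l - m) * poly f (l+m)"
    and LY: "\<And>l m. - ((\<eta>+\<beta>+m+\<alpha>*l) * poly g m) = bLY R (-(l+m)) l * poly g (l+m)"
  shows "is_cmod R (NF \<alpha> \<beta> 0 \<eta> f g 0)"
proof -
  define N where "N = NF \<alpha> \<beta> 0 \<eta> f g 0"
  have scN: "sc N = scp" unfolding N_def by (simp add: fun_eq_iff NF_simps scp_def)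
  have 1: "vector_space (sc N)"
    unfolding vector_space_def N_def by (auto simp: NF_simps algebra_simps smult_add_right smult_add_left)
  have 2: "is_lin (sc N) (sc N) (dd N)"
    unfolding is_lin_def N_def by (simp add: NF_simps algebra_simps)
  have 3: "\<forall>x l. is_lin (sc N) (sc N) (act N x l)"
  proof (intro allI)
    fix x l show "is_lin (sc N) (sc N) (act N x l)"
      unfolding is_lin_def N_def
      by (cases x) (simp_all add: NF_simps pcompose_add pcompose_smult algebra_simps smult_add_right)
  qed
  have 4: "\<forall>x v. \<exists>n (c :: nat \<Rightarrow> _). \<forall>l. act N x l v = (\<Sum>i\<le>n. sc N (l ^ i) (c i))"
    unfolding scN unfolding N_def by (intro allI) (rule PF_NF[unfolded PF_def])
  have 5: "\<forall>x l v. act N x l (dd N v) = dd N (act N x l v) + sc N l (act N x l v)"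
  proof (intro allI)
    fix x l v
    show "act N x l (dd N v) = dd N (act N x l v) + sc N l (act N x l v)"
    proof (cases x)
      case L
      show ?thesis unfolding L N_def
        by (rule prod_eqI) (simp_all add: NF_simps algebra_simps, rule pext, simp add: poly_pcompose algebra_simps)
    next
      case Y then show ?thesis unfolding N_def by (simp add: NF_simps algebra_simps)
    next
      case M then show ?thesis unfolding N_def by (simp add: NF_simps)
    qed
  qed
  have 6: "\<forall>l m v.
        act N L l (act N L m v) - act N L m (act N L l v) = sc N (bLL R (-(l+m)) l) (act N L (l+m) v) \<and>
        act N L l (act N Y m v) - act N Y m (act N L l v) = sc N (bLY R (-(l+m)) l) (act N Y (l+m) v) \<and>
        act N L l (act N M m v) - act N M m (act N L l v) = sc N (bLM R (-(l+m)) l) (act N M (l+m) v) \<and>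
        act N Y l (act N Y m v) - act N Y m (act N Y l v) = sc N (bYY R (-(l+m)) l) (act N M (l+m) v) \<and>
        act N Y l (act N M m v) - act N M m (act N Y l v) = 0 \<and>
        act N M l (act N M m v) - act N M m (act N M l v) = 0"
  proof (intro allI)
    fix l m and v :: "complex \<times> complex poly"
    define Q where "Q = poly (snd v) (\<eta>+l+m)"
    have a: "act N L l (act N L m v) - act N L m (act N L l v) = sc N (bLL R (-(l+m)) l) (act N L (l+m) v)"
    proof (rule prod_eqI)
      have "poly (pcompose (snd v) [:m,1:] * [:\<alpha>*m+\<beta>,1:]) (\<eta>+l) * poly f l - poly (pcompose (snd v) [:l,1:] * [:\<alpha>*l+\<beta>,1:]) (\<eta>+m) * poly f m
            = Q * ((\<eta>+\<beta>+l+\<alpha>*m) * poly f l - (\<eta>+\<beta>+m+\<alpha>*l) * poly f m)"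
        unfolding Q_def by (simp add: poly_pcompose algebra_simps)
      also have "\<dots> = Q * ((l - m) * poly f (l+m))" by (simp only: LL)
      also have "\<dots> = bLL R (-(l+m)) l * (poly (snd v) (\<eta>+(l+m)) * poly f (l+m))"
        unfolding Q_def by (simp add: bll algebra_simps)
      finally show "fst (act N L l (act N L m v) - act N L m (act N L l v)) = fst (sc N (bLL R (-(l+m)) l) (act N L (l+m) v))"
        unfolding N_def by (simp add: NF_simps)
      show "snd (act N L l (act N L m v) - act N L m (act N L l v)) = snd (sc N (bLL R (-(l+m)) l) (act N L (l+m) v))"
        unfolding N_def by (simp add: NF_simps, rule pext, simp add: poly_pcompose bll algebra_simps)
    qed
    have b: "act N L l (act N Y m v) - act N Y m (act N L l v) = sc N (bLY R (-(l+m)) l) (act N Y (l+m) v)"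
    proof (rule prod_eqI)
      have "0 - poly (pcompose (snd v) [:l,1:] * [:\<alpha>*l+\<beta>,1:]) (\<eta>+m) * poly g m
            = Q * (- ((\<eta>+\<beta>+m+\<alpha>*l) * poly g m))"
        unfolding Q_def by (simp add: poly_pcompose algebra_simps)
      also have "\<dots> = Q * (bLY R (-(l+m)) l * poly g (l+m))" by (simp only: LY)
      also have "\<dots> = bLY R (-(l+m)) l * (poly (snd v) (\<eta>+(l+m)) * poly g (l+m))"
        unfolding Q_def by (simp add: algebra_simps)
      finally show "fst (act N L l (act N Y m v) - act N Y m (act N L l v)) = fst (sc N (bLY R (-(l+m)) l) (act N Y (l+m) v))"
        unfolding N_def by (simp add: NF_simps)
      show "snd (act N L l (act N Y m v) - act N Y m (act N L l v)) = snd (sc N (bLY R (-(l+m)) l) (act N Y (l+m) v))"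
        unfolding N_def by (simp add: NF_simps)
    qed
    show "act N L l (act N L m v) - act N L m (act N L l v) = sc N (bLL R (-(l+m)) l) (act N L (l+m) v) \<and>
        act N L l (act N Y m v) - act N Y m (act N L l v) = sc N (bLY R (-(l+m)) l) (act N Y (l+m) v) \<and>
        act N L l (act N M m v) - act N M m (act N L l v) = sc N (bLM R (-(l+m)) l) (act N M (l+m) v) \<and>
        act N Y l (act N Y m v) - act N Y m (act N Y l v) = sc N (bYY R (-(l+m)) l) (act N M (l+m) v) \<and>
        act N Y l (act N M m v) - act N M m (act N Y l v) = 0 \<and>
        act N M l (act N M m v) - act N M m (act N M l v) = 0"
      using a b unfolding N_def by (simp add: NF_simps zero_prod_def)
  qed
  show ?thesis unfolding is_cmod_def N_def[symmetric] using 1 2 3 4 5 6 by (intro conjI)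
qed

locale EXT =
  fixes R :: alg and \<eta> \<alpha> \<beta> \<gamma> :: complex and V :: "'v::ab_group_add cmod"
    and i :: "complex \<Rightarrow> 'v" and p :: "'v \<Rightarrow> complex poly"
  assumes ext: "is_ext R \<eta> (Mabg \<alpha> \<beta> \<gamma>) (V, i, p)"
begin

lemma cm: "is_cmod R V" using ext unfolding is_ext_def by simp

sublocale vs: vector_space "sc V" using cm unfolding is_cmod_def by blast

lemma i_add: "i (a + b) = i a + i b" and i_sc: "i (c * x) = sc V c (i x)"
  and i_dd: "i (\<eta> * x) = dd V (i x)" and i_act: "act V z l (i x) = i 0"
  using ext unfolding is_ext_def is_hom_def is_lin_def by (auto simp: Ceta_simps)

lemma i0: "i 0 = 0" using additive_facts(1)[of i] i_add by blast
lemma i_act0: "act V z l (i x) = 0" using i_act i0 by simp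

lemma p_add: "p (a + b) = p a + p b" and p_sc: "p (sc V c w) = smult c (p w)"
  and p_dd: "p (dd V w) = [:0,1:] * p w" and p_act: "p (act V z l w) = act (Mabg \<alpha> \<beta> \<gamma>) z l (p w)"
  using ext unfolding is_ext_def is_hom_def is_lin_def by (auto simp: Mabg_simps)

lemma inj_i: "inj i" and surj_p: "surj p" and ker: "p w = 0 \<longleftrightarrow> w \<in> range i"
  using ext unfolding is_ext_def by auto

lemma dd_add: "dd V (a + b) = dd V a + dd V b" and dd_sc: "dd V (sc V c w) = sc V c (dd V w)"
  using cm unfolding is_cmod_def is_lin_def by auto

lemma act_add: "act V z l (a + b) = act V z l a + act V z l b"
  and act_sc: "act V z l (sc V c w) = sc V c (act V z l w)"
  using cm unfolding is_cmod_def is_lin_def by auto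

lemma polyn: "\<exists>n (c :: nat \<Rightarrow> 'v). \<forall>l. act V z l w = (\<Sum>k\<le>n. sc V (l ^ k) (c k))"
  using cm unfolding is_cmod_def by blast

lemma dcomp: "act V z l (dd V w) = dd V (act V z l w) + sc V l (act V z l w)"
  using cm unfolding is_cmod_def by blast

definition v0 where "v0 = (SOME v. p v = 1)"
lemma p_v0: "p v0 = 1" unfolding v0_def by (rule someI_ex) (use surj_p in \<open>metis surjD\<close>)

definition D where "D k = (dd V ^^ k) v0"
definition pvN where "pvN N q = (\<Sum>k\<le>N. sc V (coeff q k) (D k))"
definition pv where "pv q = pvN (degree q) q"

lemma pvN_eq: assumes "degree q \<le> N" shows "pvN N q = pv q"
proof -
  have "(\<Sum>k\<le>N. sc V (coeff q k) (D k)) = (\<Sum>k\<le>degree q. sc V (coeff q k) (D k))"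
    by (rule sum.mono_neutral_right) (use assms in \<open>auto simp: coeff_eq_0\<close>)
  then show ?thesis unfolding pv_def pvN_def .
qed

lemma pv_add: "pv (q1 + q2) = pv q1 + pv q2"
proof -
  define N where "N = degree q1 + degree q2"
  have "degree (q1 + q2) \<le> N" unfolding N_def using degree_add_le[of q1 _ q2] by simp
  then have "pv (q1 + q2) = pvN N (q1 + q2)" using pvN_eq by simp
  also have "\<dots> = pvN N q1 + pvN N q2" unfolding pvN_def by (simp add: vs.scale_left_distrib sum.distrib)
  also have "\<dots> = pv q1 + pv q2" using pvN_eq[of q1 N] pvN_eq[of q2 N] N_def by simp
  finally show ?thesis .
qed

lemma pv_sc: "pv (smult c q) = sc V c (pv q)"
proof -
  have "pv (smult c q) = pvN (degree q) (smult c q)" using pvN_eq degree_smult_le by metis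
  also have "\<dots> = sc V c (pv q)" unfolding pvN_def pv_def by (simp add: vs.scale_sum_right)
  finally show ?thesis .
qed

lemma dd_sum: "dd V (\<Sum>k\<le>n. F k) = (\<Sum>k\<le>(n::nat). dd V (F k))"
  using additive_facts(4)[of "dd V"] dd_add by blast

lemma pv_X: "pv ([:0,1:] * q) = dd V (pv q)"
proof -
  have "pv ([:0,1:] * q) = pvN (Suc (degree q)) (pCons 0 q)"
    using pvN_eq[of "pCons 0 q" "Suc (degree q)"] by simp
  also have "\<dots> = (\<Sum>k\<le>degree q. sc V (coeff q k) (D (Suc k)))"
    unfolding pvN_def by (simp add: sum.atMost_Suc_shift del: sum.atMost_Suc)
  also have "\<dots> = dd V (pv q)"
    unfolding pv_def pvN_def dd_sum by (simp add: dd_sc D_def)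
  finally show ?thesis .
qed

lemma pv_X': "pv (pCons 0 q) = dd V (pv q)" using pv_X by simp

lemma pv_0: "pv 0 = 0" unfolding pv_def pvN_def by simp

lemma p_D: "p (D k) = monom 1 k"
  by (induction k) (simp_all add: D_def p_v0 p_dd monom_Suc)

lemma p_sum: "p (\<Sum>k\<le>n. F k) = (\<Sum>k\<le>(n::nat). p (F k))"
  using additive_facts(4)[of p] p_add by blast

lemma p_pv: "p (pv q) = q"
  unfolding pv_def pvN_def p_sum by (simp add: p_sc p_D smult_monom poly_as_sum_of_monoms)

lemma p_minus: "p (a - b) = p a - p b" using additive_facts(2)[of p] p_add by blast
lemma i_minus: "i (a - b) = i a - i b" using additive_facts(2)[of i] i_add by blast
lemma dd_minus: "dd V (a - b) = dd V a - dd V b" using additive_facts(2)[of "dd V"] dd_add by blast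

definition kap where "kap w = (SOME x. i x = w - pv (p w))"

lemma kap: "i (kap w) = w - pv (p w)"
proof -
  have "p (w - pv (p w)) = 0" by (simp add: p_minus p_pv)
  then have "\<exists>x. i x = w - pv (p w)" using ker by (metis rangeE)
  then show ?thesis unfolding kap_def by (rule someI_ex)
qed

lemma kap_unique: "i x = w - pv (p w) \<Longrightarrow> kap w = x"
  using kap inj_i by (metis injD)

lemma decomp: "w = i (kap w) + pv (p w)" using kap by simp

lemma kap_add: "kap (a + b) = kap a + kap b"
  by (rule kap_unique) (simp add: i_add kap p_add pv_add algebra_simps)

lemma kap_sc: "kap (sc V c w) = c * kap w"
  by (rule kap_unique) (simp add: i_sc kap p_sc pv_sc vs.scale_right_diff_distrib)

lemma kap_i: "kap (i x) = x"
proof (rule kap_unique)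
  have "p (i x) = 0" using ker by simp
  then show "i x = i x - pv (p (i x))" by (simp add: pv_0)
qed

lemma kap_pv: "kap (pv q) = 0"
  by (rule kap_unique) (simp add: p_pv i0)

lemma kap_dd: "kap (dd V w) = \<eta> * kap w"
  by (rule kap_unique) (simp add: i_dd kap dd_minus p_dd pv_X')

lemma kap_sum: "kap (\<Sum>k\<le>n. F k) = (\<Sum>k\<le>(n::nat). kap (F k))"
  using additive_facts(4)[of kap] kap_add by blast

definition Fz where "Fz z l = kap (act V z l v0)"

lemma kap_act_D: "kap (act V z l (D k)) = (\<eta>+l)^k * Fz z l"
proof (induction k)
  case 0 then show ?case by (simp add: D_def Fz_def)
next
  case (Suc k)
  have "kap (act V z l (D (Suc k))) = kap (act V z l (dd V (D k)))" by (simp add: D_def)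
  also have "\<dots> = \<eta> * kap (act V z l (D k)) + l * kap (act V z l (D k))"
    by (simp add: dcomp kap_add kap_dd kap_sc)
  finally show ?case using Suc by (simp add: algebra_simps)
qed

lemma act_sum: "act V z l (\<Sum>k\<le>n. F k) = (\<Sum>k\<le>(n::nat). act V z l (F k))"
  using additive_facts(4)[of "act V z l"] act_add by blast

lemma kap_act_pv: "kap (act V z l (pv q)) = poly q (\<eta>+l) * Fz z l"
  unfolding pv_def pvN_def act_sum kap_sum
  by (simp add: act_sc kap_sc kap_act_D poly_altdef sum_distrib_left mult_ac)

lemma kap_act: "kap (act V z l w) = poly (p w) (\<eta>+l) * Fz z l"
proof -
  have "kap (act V z l w) = kap (act V z l (i (kap w) + pv (p w)))" using decomp[of w] by simp
  also have "\<dots> = poly (p w) (\<eta>+l) * Fz z l" by (simp add: act_add i_act0 kap_add kap_act_pv)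
  finally show ?thesis .
qed

lemma Fz_poly: "\<exists>fz. \<forall>l. Fz z l = poly fz l"
proof -
  obtain n c where nc: "\<forall>l. act V z l v0 = (\<Sum>k\<le>n. sc V (l ^ k) (c k))" using polyn by blast
  have "\<forall>l. Fz z l = poly (\<Sum>k\<le>n. monom (kap (c k)) k) l"
    unfolding Fz_def using nc by (simp add: kap_sum kap_sc poly_sum poly_monom mult.commute)
  then show ?thesis by blast
qed

lemma to_NF: "\<exists>f g h. ext_equiv R \<eta> (Mabg \<alpha> \<beta> \<gamma>) (V, i, p) (NF_ext \<alpha> \<beta> \<gamma> \<eta> f g h)"
proof -
  obtain f where f: "\<forall>l. Fz L l = poly f l" using Fz_poly by blast
  obtain g where g: "\<forall>l. Fz Y l = poly g l" using Fz_poly by blast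
  obtain h where h: "\<forall>l. Fz M l = poly h l" using Fz_poly by blast
  define \<phi> where "\<phi> = (\<lambda>w. (kap w, p w))"
  define N where "N = NF \<alpha> \<beta> \<gamma> \<eta> f g h"
  have bj: "bij \<phi>"
  proof (rule bijI)
    show "inj \<phi>"
    proof (rule injI)
      fix a b assume "\<phi> a = \<phi> b"
      then have "kap a = kap b" "p a = p b" unfolding \<phi>_def by auto
      then show "a = b" using decomp[of a] decomp[of b] by metis
    qed
    show "surj \<phi>"
    proof (rule surjI)
      fix y :: "complex \<times> complex poly"
      show "\<phi> (i (fst y) + pv (snd y)) = y"
        unfolding \<phi>_def using ker[of "i (fst y)"]
        by (simp add: kap_add kap_i kap_pv p_add p_pv)
    qed
  qed
  have add: "\<forall>a b. \<phi> (a+b) = \<phi> a + \<phi> b" unfolding \<phi>_def by (simp add: kap_add p_add)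
  have scm: "\<forall>c a. \<phi> (sc V c a) = sc N c (\<phi> a)" unfolding \<phi>_def N_def by (simp add: kap_sc p_sc NF_simps)
  have ddm: "\<forall>a. \<phi> (dd V a) = dd N (\<phi> a)" unfolding \<phi>_def N_def by (simp add: kap_dd p_dd NF_simps)
  have acm: "\<forall>x l a. \<phi> (act V x l a) = act N x l (\<phi> a)"
  proof (intro allI)
    fix x l a show "\<phi> (act V x l a) = act N x l (\<phi> a)"
      unfolding \<phi>_def N_def by (cases x) (simp_all add: kap_act p_act NF_simps Mabg_simps f g h)
  qed
  have cmN: "is_cmod R N" by (rule transport[OF cm bj add scm ddm acm])
  have hom: "is_hom V N \<phi>" unfolding is_hom_def is_lin_def using add scm ddm acm by blast
  have "is_ext R \<eta> (Mabg \<alpha> \<beta> \<gamma>) (NF_ext \<alpha> \<beta> \<gamma> \<eta> f g h)" using cmN NF_ext_iff N_def by blast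
  moreover have "\<forall>x. \<phi> (i x) = (x, 0)" unfolding \<phi>_def using ker by (simp add: kap_i)
  ultimately have "ext_equiv R \<eta> (Mabg \<alpha> \<beta> \<gamma>) (V, i, p) (NF_ext \<alpha> \<beta> \<gamma> \<eta> f g h)"
    using hom ext unfolding ext_equiv_def NF_ext_def N_def by (auto simp: \<phi>_def)
  then show ?thesis by blast
qed

end

lemma ext_to_NF:
  assumes "is_ext R \<eta> (Mabg \<alpha> \<beta> \<gamma>) E"
  shows "\<exists>f g h. ext_equiv R \<eta> (Mabg \<alpha> \<beta> \<gamma>) E (NF_ext \<alpha> \<beta> \<gamma> \<eta> f g h)"
proof -
  obtain V i p where e: "E = (V, i, p)" by (cases E) auto
  interpret EXT R \<eta> \<alpha> \<beta> \<gamma> V i p using assms e by unfold_locales simp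
  show ?thesis using to_NF e by simp
qed

lemma LL_ne0:
  fixes f :: "complex poly"
  assumes LL: "\<And>l m. (e+l+\<alpha>*m) * poly f l - (e+m+\<alpha>*l) * poly f m = (l-m) * poly f (l+m)"
    and e: "e \<noteq> 0"
  shows "f = smult (poly f 0 / e) [:e, \<alpha>:]"
proof (rule pext)
  fix x
  have "(e+x+\<alpha>*0) * poly f x - (e+0+\<alpha>*x) * poly f 0 = (x-0) * poly f (x+0)" by (rule LL)
  then have "e * poly f x = (e + \<alpha>*x) * poly f 0" by (simp add: algebra_simps)
  then show "poly f x = poly (smult (poly f 0 / e) [:e, \<alpha>:]) x" using e by (simp add: field_simps)
qed

lemma LL_0_coeffs:
  fixes f :: "complex poly"
  assumes LL: "\<And>l m. (0+l+\<alpha>*m) * poly f l - (0+m+\<alpha>*l) * poly f m = (l-m) * poly f (l+m)"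
    and a: "\<alpha> \<noteq> 0"
  shows "coeff f 0 = 0" "\<And>k. (of_nat (Suc (Suc k)) - \<alpha> - 1) * coeff f (Suc (Suc k)) = 0"
proof -
  have "(0+1+\<alpha>*0) * poly f 1 - (0+0+\<alpha>*1) * poly f 0 = (1-0) * poly f (1+0)" by (rule LL)
  then have f0: "poly f 0 = 0" using a by simp
  then show "coeff f 0 = 0" by (simp add: poly_0_coeff_0)
  have key: "l * poly (pderiv f) l = (\<alpha>+1) * poly f l - \<alpha> * l * poly (pderiv f) 0" for l
  proof -
    define Qp where "Qp = smult (poly f l) [:l, \<alpha>:] - [:\<alpha>*l,1:] * f - [:l,-1:] * pcompose f [:l,1:]"
    have "\<forall>m. poly Qp m = 0"
    proof
      fix m
      have "(0+l+\<alpha>*m) * poly f l - (0+m+\<alpha>*l) * poly f m = (l-m) * poly f (l+m)" by (rule LL)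
      then show "poly Qp m = 0" unfolding Qp_def by (simp add: poly_pcompose algebra_simps)
    qed
    then have "Qp = 0" using poly_all_0_iff_0 by blast
    then have "poly (pderiv Qp) 0 = 0" by simp
    moreover have "pderiv Qp = smult (poly f l) [:\<alpha>:] - ([:\<alpha>*l,1:] * pderiv f + f) - ([:l,-1:] * pcompose (pderiv f) [:l,1:] - pcompose f [:l,1:])"
      unfolding Qp_def by (simp add: pderiv_diff pderiv_smult pderiv_mult pderiv_pCons pderiv_pcompose pderiv_add pderiv_minus algebra_simps)
    ultimately show ?thesis by (simp add: poly_pcompose f0 algebra_simps)
  qed
  have peq: "[:0,1:] * pderiv f = smult (\<alpha>+1) f - smult (\<alpha> * poly (pderiv f) 0) [:0,1:]"
    by (rule pext) (simp add: key algebra_simps)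
  fix k
  have "coeff ([:0,1:] * pderiv f) (Suc (Suc k)) = coeff (smult (\<alpha>+1) f - smult (\<alpha> * poly (pderiv f) 0) [:0,1:]) (Suc (Suc k))"
    using peq by simp
  then show "(of_nat (Suc (Suc k)) - \<alpha> - 1) * coeff f (Suc (Suc k)) = 0"
    by (simp add: coeff_pderiv algebra_simps)
qed


lemma LL_0_sol:
  fixes f :: "complex poly"
  assumes LL: "\<And>l m. (0+l+\<alpha>*m) * poly f l - (0+m+\<alpha>*l) * poly f m = (l-m) * poly f (l+m)"
    and a: "\<alpha> \<noteq> 0"
  shows "\<exists>t c2 c3. f = monom t 1 + monom c2 2 + monom c3 3 \<and> (\<alpha> \<noteq> 1 \<longrightarrow> c2 = 0) \<and> (\<alpha> \<noteq> 2 \<longrightarrow> c3 = 0)"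
proof -
  note C = LL_0_coeffs[OF LL a]
  have cn: "(of_nat n - \<alpha> - 1) * coeff f n = 0" if "n \<ge> 2" for n
  proof -
    define k where "k = n - 2"
    have "n = Suc (Suc k)" using that unfolding k_def by simp
    then show ?thesis using C(2)[of k] by simp
  qed
  define t where "t = coeff f 1"
  show ?thesis
  proof (cases "\<forall>n\<ge>2. coeff f n = 0")
    case True
    have "f = monom t 1"
    proof (rule poly_eqI)
      fix n show "coeff f n = coeff (monom t 1) n"
        using True C(1) unfolding t_def
        by (cases "n \<ge> 2") (auto simp: coeff_monom, metis One_nat_def less_2_cases not_le)
    qed
    then show ?thesis by (rule_tac x=t in exI, rule_tac x=0 in exI, rule_tac x=0 in exI) simp
  next
    case False
    then obtain n where n2: "n \<ge> 2" and cnz: "coeff f n \<noteq> 0" by blast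
    define c where "c = coeff f n"
    have h: "of_nat n - \<alpha> - 1 = 0" using cn[OF n2] cnz mult_eq_0_iff by blast
    have al: "\<alpha> = of_nat n - 1" using h by algebra
    have oth: "coeff f m = 0" if "m \<ge> 2" "m \<noteq> n" for m
    proof -
      have "(of_nat m - of_nat n) * coeff f m = 0" using cn[OF that(1)] al by simp
      moreover have "(of_nat m :: complex) \<noteq> of_nat n" using that(2) by simp
      ultimately show ?thesis by simp
    qed
    have fe: "f = monom t 1 + monom c n"
    proof (rule poly_eqI)
      fix m show "coeff f m = coeff (monom t 1 + monom c n) m"
      proof (cases "m \<ge> 2")
        case True then show ?thesis using oth[of m] n2 unfolding c_def by (auto simp: coeff_monom)
      next
        case False
        then have "m = 0 \<or> m = 1" by auto
        then show ?thesis using C(1) n2 unfolding t_def by (auto simp: coeff_monom)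
      qed
    qed
    have pf: "poly f x = t * x + c * x ^ n" for x unfolding fe by (simp add: poly_monom)
    show ?thesis
    proof (cases "n = 2 \<or> n = 3")
      case True
      then show ?thesis
      proof
        assume "n = 2"
        then show ?thesis using fe al
          by (rule_tac x=t in exI, rule_tac x=c in exI, rule_tac x=0 in exI) simp
      next
        assume "n = 3"
        then show ?thesis using fe al
          by (rule_tac x=t in exI, rule_tac x=0 in exI, rule_tac x=c in exI) simp
      qed
    next
      case False
      then have n4: "n \<ge> 4" using n2 by auto
      define z where "z = (-1::complex) ^ n"
      define w where "w = (2::complex) ^ n"
      have e1: "(0+1+\<alpha>*(-1)) * poly f 1 - (0+(-1)+\<alpha>*1) * poly f (-1) = (1-(-1)) * poly f (1+(-1))" by (rule LL)
      have e2: "(0+2+\<alpha>*(-1)) * poly f 2 - (0+(-1)+\<alpha>*2) * poly f (-1) = (2-(-1)) * poly f (2+(-1))" by (rule LL)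
      have z0: "(0::complex)^n = 0" using n4 by simp
      have a1: "poly f (1 + -1) = 0" "poly f 1 = t + c" "poly f (-1) = -t + c * z"
        "poly f (2 + -1) = t + c" "poly f 2 = 2*t + c * w"
        unfolding pf z_def w_def using z0 by simp_all
      have "(1 - \<alpha>) * (c * (1 + z)) = 0" using e1 a1 by algebra
      moreover have "1 - \<alpha> \<noteq> 0"
      proof
        assume "1 - \<alpha> = 0"
        then have "(of_nat n :: complex) = of_nat 2" using al by (simp add: algebra_simps)
        then have "n = 2" using of_nat_eq_iff by blast
        then show False using n4 by simp
      qed
      ultimately have z: "z = -1" using cnz c_def by (simp add: add_eq_0_iff)
      have "(2 - \<alpha>) * (c * (w - 2)) = 0" using e2 z a1 by algebra
      moreover have "2 - \<alpha> \<noteq> 0"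
      proof
        assume "2 - \<alpha> = 0"
        then have "(of_nat n :: complex) = of_nat 3" using al by (simp add: algebra_simps)
        then have "n = 3" using of_nat_eq_iff by blast
        then show False using n4 by simp
      qed
      moreover have "w \<noteq> 2"
      proof
        assume "w = 2"
        then have "(of_nat (2^n) :: complex) = of_nat 2" unfolding w_def by simp
        then have "(2::nat)^n = 2" using of_nat_eq_iff by blast
        moreover have "(2::nat)^n \<ge> 2^4" using n4 by (rule power_increasing) simp
        ultimately show False by simp
      qed
      ultimately show ?thesis using cnz c_def by simp
    qed
  qed
qed


lemma classif_generic:
  assumes A1: "\<And>f g h. is_ext R \<eta> (Mabg \<alpha> \<beta> \<gamma>) (NF_ext \<alpha> \<beta> \<gamma> \<eta> f g h) \<Longrightarrow> h = 0"
    and A2: "\<And>f g. is_ext R \<eta> (Mabg \<alpha> \<beta> \<gamma>) (NF_ext \<alpha> \<beta> \<gamma> \<eta> f g 0) \<Longrightarrow>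
               \<not> trivial_ext R \<eta> (Mabg \<alpha> \<beta> \<gamma>) (NF_ext \<alpha> \<beta> \<gamma> \<eta> f g 0) \<Longrightarrow>
               \<exists>f' g'. lst f' g' \<and> ext_equiv R \<eta> (Mabg \<alpha> \<beta> \<gamma>) (NF_ext \<alpha> \<beta> \<gamma> \<eta> f g 0) (NF_ext \<alpha> \<beta> \<gamma> \<eta> f' g' 0)"
    and A3: "\<And>f g. lst f g \<Longrightarrow> is_ext R \<eta> (Mabg \<alpha> \<beta> \<gamma>) (NF_ext \<alpha> \<beta> \<gamma> \<eta> f g 0) \<and>
               \<not> trivial_ext R \<eta> (Mabg \<alpha> \<beta> \<gamma>) (NF_ext \<alpha> \<beta> \<gamma> \<eta> f g 0)"
  shows "classification TYPE('v::ab_group_add) R \<alpha> \<beta> \<gamma> \<eta> lst"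
proof -
  define Mm where "Mm = Mabg \<alpha> \<beta> \<gamma>"
  have P1: "\<forall>E :: 'v ext. is_ext R \<eta> Mm E \<longrightarrow> (\<exists>f g h. ext_equiv R \<eta> Mm E (NF_ext \<alpha> \<beta> \<gamma> \<eta> f g h))"
    unfolding Mm_def using ext_to_NF by blast
  have P2: "\<forall>f g h. is_ext R \<eta> Mm (NF_ext \<alpha> \<beta> \<gamma> \<eta> f g h) \<longrightarrow> h = 0" unfolding Mm_def using A1 by blast
  have P3: "\<forall>E :: 'v ext. is_ext R \<eta> Mm E \<and> \<not> trivial_ext R \<eta> Mm E \<longrightarrow>
        (\<exists>f g. lst f g \<and> ext_equiv R \<eta> Mm E (NF_ext \<alpha> \<beta> \<gamma> \<eta> f g 0))"
  proof (intro allI impI)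
    fix E :: "'v ext" assume a: "is_ext R \<eta> Mm E \<and> \<not> trivial_ext R \<eta> Mm E"
    then obtain f g h where e: "ext_equiv R \<eta> Mm E (NF_ext \<alpha> \<beta> \<gamma> \<eta> f g h)" using P1 by blast
    then have ex: "is_ext R \<eta> Mm (NF_ext \<alpha> \<beta> \<gamma> \<eta> f g h)" unfolding ext_equiv_def by blast
    then have h0: "h = 0" using P2 by blast
    have nt: "\<not> trivial_ext R \<eta> Mm (NF_ext \<alpha> \<beta> \<gamma> \<eta> f g 0)"
    proof
      assume "trivial_ext R \<eta> Mm (NF_ext \<alpha> \<beta> \<gamma> \<eta> f g 0)"
      then have "trivial_ext R \<eta> Mm E" using e h0 ext_equiv_trans unfolding trivial_ext_def by blast
      then show False using a by blast
    qed
    obtain f' g' where "lst f' g'" "ext_equiv R \<eta> Mm (NF_ext \<alpha> \<beta> \<gamma> \<eta> f g 0) (NF_ext \<alpha> \<beta> \<gamma> \<eta> f' g' 0)"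
      using A2[of f g] ex h0 nt unfolding Mm_def by blast
    then show "\<exists>f g. lst f g \<and> ext_equiv R \<eta> Mm E (NF_ext \<alpha> \<beta> \<gamma> \<eta> f g 0)"
      using e h0 ext_equiv_trans by blast
  qed
  have P4: "(\<exists>f g h. is_ext R \<eta> Mm (NF_ext \<alpha> \<beta> \<gamma> \<eta> f g h) \<and> \<not> trivial_ext R \<eta> Mm (NF_ext \<alpha> \<beta> \<gamma> \<eta> f g h))
        \<longleftrightarrow> (\<exists>f g. lst f g)"
  proof
    assume "\<exists>f g h. is_ext R \<eta> Mm (NF_ext \<alpha> \<beta> \<gamma> \<eta> f g h) \<and> \<not> trivial_ext R \<eta> Mm (NF_ext \<alpha> \<beta> \<gamma> \<eta> f g h)"
    then obtain f g h where "is_ext R \<eta> Mm (NF_ext \<alpha> \<beta> \<gamma> \<eta> f g h)" "\<not> trivial_ext R \<eta> Mm (NF_ext \<alpha> \<beta> \<gamma> \<eta> f g h)" by blast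
    moreover then have "h = 0" using P2 by blast
    ultimately show "\<exists>f g. lst f g" using A2 unfolding Mm_def by blast
  next
    assume "\<exists>f g. lst f g"
    then show "\<exists>f g h. is_ext R \<eta> Mm (NF_ext \<alpha> \<beta> \<gamma> \<eta> f g h) \<and> \<not> trivial_ext R \<eta> Mm (NF_ext \<alpha> \<beta> \<gamma> \<eta> f g h)"
      using A3 unfolding Mm_def by blast
  qed
  show ?thesis unfolding classification_def Let_def Mm_def[symmetric] using P1 P2 P3 P4 by blast
qed

lemma LL_cases:
  fixes f :: "complex poly"
  assumes LL: "\<And>l m. (e+l+\<alpha>*m) * poly f l - (e+m+\<alpha>*l) * poly f m = (l-m) * poly f (l+m)"
    and a: "\<alpha> \<noteq> 0"
  shows "\<exists>t f'. f = f' + smult t [:e, \<alpha>:] \<and> ((e \<noteq> 0 \<and> f' = 0) \<or>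
           (e = 0 \<and> (\<exists>c2 c3. f' = monom c2 2 + monom c3 3 \<and> (\<alpha> \<noteq> 1 \<longrightarrow> c2 = 0) \<and> (\<alpha> \<noteq> 2 \<longrightarrow> c3 = 0))))"
proof (cases "e = 0")
  case False
  then show ?thesis using LL_ne0[OF LL False] by (rule_tac x="poly f 0 / e" in exI, rule_tac x=0 in exI) simp
next
  case True
  have LL0: "\<And>l m. (0+l+\<alpha>*m) * poly f l - (0+m+\<alpha>*l) * poly f m = (l-m) * poly f (l+m)"
    using LL True by simp
  obtain t c2 c3 where tc: "f = monom t 1 + monom c2 2 + monom c3 3" "\<alpha> \<noteq> 1 \<longrightarrow> c2 = 0" "\<alpha> \<noteq> 2 \<longrightarrow> c3 = 0"
    using LL_0_sol[OF LL0 a] by blast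
  have "monom t 1 = smult (t / \<alpha>) [:e, \<alpha>:]" using True a by (simp add: monom_Suc monom_0)
  then have "f = (monom c2 2 + monom c3 3) + smult (t/\<alpha>) [:e, \<alpha>:]" using tc(1) by (simp add: algebra_simps)
  then show ?thesis using tc True by blast
qed

lemma shift0:
  assumes ex: "is_ext R \<eta> (Mabg \<alpha> \<beta> 0) (NF_ext \<alpha> \<beta> 0 \<eta> f g 0)"
    and fe: "f = f' + smult t [:\<eta>+\<beta>, \<alpha>:]"
  shows "ext_equiv R \<eta> (Mabg \<alpha> \<beta> 0) (NF_ext \<alpha> \<beta> 0 \<eta> f g 0) (NF_ext \<alpha> \<beta> 0 \<eta> f' g 0)"
proof -
  have "f + smult (-t) [:\<eta>+\<beta>, \<alpha>:] = f'" "g + [:(-t)*0:] = g" using fe by simp_all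
  then show ?thesis using shift[OF ex, of "-t"] by simp
qed

lemma H0_a: 
  fixes h :: "complex poly"
  assumes "\<And>l m. (l - m) * poly h (l+m) = 0" shows "h = 0"
proof (rule pext)
  fix x
  have "((x+1)/2 - (x-1)/2) * poly h ((x+1)/2 + (x-1)/2) = 0" by (rule assms)
  moreover have "(x+1)/2 - (x-1)/2 = 1" "(x+1)/2 + (x-1)/2 = x" by (simp_all add: field_simps)
  ultimately show "poly h x = poly 0 x" by simp
qed

lemma H0_c:
  fixes h :: "complex poly"
  assumes "\<And>l m. (l - m) * (l + m - 2*c) * poly h (l+m) = 0" shows "h = 0"
proof -
  have "[:-2*c, 1:] * h = 0"
  proof (rule pext)
    fix x
    have F: "((x+1)/2 - (x-1)/2) * ((x+1)/2 + (x-1)/2 - 2*c) * poly h ((x+1)/2 + (x-1)/2) = 0" by (rule assms)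
    have e1: "(x+1)/2 - (x-1)/2 = 1" and e2: "(x+1)/2 + (x-1)/2 = x" by (simp_all add: field_simps)
    from F have "1 * (x - 2*c) * poly h x = 0" unfolding e1 e2 .
    then show "poly ([:-2*c, 1:] * h) x = poly 0 x" by (simp add: algebra_simps)
  qed
  moreover have "[:-2*c, 1:] \<noteq> (0 :: complex poly)" by simp
  ultimately show ?thesis by (metis mult_eq_0_iff)
qed


lemma lin_form:
  fixes g :: "complex poly"
  assumes "degree g \<le> 1" shows "g = [:coeff g 0, coeff g 1:]"
proof (rule poly_eqI)
  fix n show "coeff g n = coeff [:coeff g 0, coeff g 1:] n"
  proof (cases n)
    case (Suc k) then show ?thesis using assms by (cases k) (auto simp: coeff_eq_0)
  qed simp
qed

lemma deg_le1:
  fixes g :: "complex poly"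
  assumes "[:b0, b1:] \<noteq> 0" "[:b0, b1:] * g = smult k [:e, a:]"
  shows "degree g \<le> 1"
proof (cases "g = 0")
  case False
  have "degree ([:b0, b1:] * g) = degree [:b0, b1:] + degree g"
    using assms(1) False by (rule degree_mult_eq)
  moreover have "degree (smult k [:e, a:]) \<le> 1"
    by (metis degree_pCons_le degree_smult_le le_trans degree_pCons_eq_if One_nat_def le_Suc_eq)
  ultimately show ?thesis using assms(2) by simp
qed simp

lemma LY_ab:
  fixes g :: "complex poly"
  assumes LY: "\<And>l m. - ((e+m+\<alpha>*l) * poly g m) = (-(l+m) + a*l + b) * poly g (l+m)"
    and ab: "(a, b) \<noteq> (1, 0)" and al: "\<alpha> \<noteq> 0"
  shows "g = 0 \<or> (\<exists>k. k \<noteq> 0 \<and> g = [:k:] \<and> \<alpha> = 1 - a \<and> a \<noteq> 1 \<and> b + e = 0) \<or>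
    (\<exists>k. k \<noteq> 0 \<and> g = smult k [:1, -1/b:] \<and> a = 1 \<and> b \<noteq> 0 \<and> b + e = 0 \<and> \<alpha> = 1)"
proof -
  have m0: "[:b, a-1:] * g = smult (- poly g 0) [:e, \<alpha>:]"
  proof (rule pext)
    fix x
    have "- ((e+0+\<alpha>*x) * poly g 0) = (-(x+0) + a*x + b) * poly g (x+0)" by (rule LY)
    then show "poly ([:b, a-1:] * g) x = poly (smult (- poly g 0) [:e, \<alpha>:]) x" by (simp add: algebra_simps)
  qed
  have nz: "[:b, a-1:] \<noteq> 0" using ab by auto
  show ?thesis
  proof (cases "poly g 0 = 0")
    case True
    then have "[:b, a-1:] * g = 0" using m0 by simp
    then have "g = 0" using nz by (metis mult_eq_0_iff)
    then show ?thesis by simp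
  next
    case False
    have gf: "g = [:coeff g 0, coeff g 1:]" by (rule lin_form[OF deg_le1[OF nz m0]])
    define G where "G = coeff g 0"
    define H where "H = coeff g 1"
    have G0: "G \<noteq> 0" using False unfolding G_def by (simp add: poly_0_coeff_0)
    have pg: "\<And>x. poly g x = G + H * x" unfolding G_def H_def by (subst gf) simp
    have i1: "- ((e+m+\<alpha>*l) * (G + H*m)) = (-(l+m) + a*l + b) * (G + H*(l+m))" for l m
      using LY[of m l] unfolding pg .
    have p1: "- ((e+0+\<alpha>*0) * (G + H*0)) = (-(0+0) + a*0 + b) * (G + H*(0+0))" by (rule i1)
    have p2: "- ((e+0+\<alpha>*1) * (G + H*0)) = (-(1+0) + a*1 + b) * (G + H*(1+0))" by (rule i1)
    have p3: "- ((e+0+\<alpha>*(-1)) * (G + H*0)) = (-((-1)+0) + a*(-1) + b) * (G + H*((-1)+0))" by (rule i1)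
    have p4: "- ((e+1+\<alpha>*0) * (G + H*1)) = (-(0+1) + a*0 + b) * (G + H*(0+1))" by (rule i1)
    have p5: "- ((e+(-1)+\<alpha>*0) * (G + H*(-1))) = (-(0+(-1)) + a*0 + b) * (G + H*(0+(-1)))" by (rule i1)
    have p6: "- ((e+1+\<alpha>*1) * (G + H*1)) = (-(1+1) + a*1 + b) * (G + H*(1+1))" by (rule i1)
    have E1: "(a-1) * H = 0" using p1 p2 p3 by algebra
    have E2: "- \<alpha> * H = (a-2) * H" using p1 p2 p3 p4 p5 p6 by algebra
    have E3: "- \<alpha> * G = (a-1) * G + b * H" using p1 p2 p3 by algebra
    have E4: "- e * H = b * H" using p1 p4 p5 by algebra
    have E5: "- e * G = b * G" using p1 by algebra
    show ?thesis
    proof (cases "H = 0")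
      case True
      have "(\<alpha> - (1 - a)) * G = 0" using E3 True by algebra
      then have "\<alpha> = 1 - a" using G0 by simp
      moreover have "(b + e) * G = 0" using E5 by algebra
      then have "b + e = 0" using G0 by simp
      moreover have "g = [:G:]" using gf True unfolding G_def H_def by simp
      moreover have "a \<noteq> 1" using al calculation(1) by auto
      ultimately show ?thesis using G0 by blast
    next
      case False
      have a1: "a = 1" using E1 False by simp
      have al1: "\<alpha> = 1" using E2 False a1 by simp
      have "(b + e) * H = 0" using E4 by algebra
      then have be: "b + e = 0" using False by simp
      have gh: "- G = b * H" using E3 a1 al1 by simp
      have b0: "b \<noteq> 0" using ab a1 by simp
      have "H = - G / b" using gh b0 by (simp add: field_simps)
      then have "g = smult G [:1, -1/b:]" using gf unfolding G_def H_def by simp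
      then show ?thesis using G0 a1 b0 be al1 by blast
    qed
  qed
qed


lemma LY_c:
  fixes g :: "complex poly"
  assumes LY: "\<And>l m. - ((e+m+\<alpha>*l) * poly g m) = (-(l+m) + 3/2*l + c) * poly g (l+m)"
  shows "g = 0 \<or> (\<exists>k. k \<noteq> 0 \<and> g = [:k:] \<and> \<alpha> = - 1 / 2 \<and> c + e = 0)"
proof -
  have m0: "[:c, 1/2:] * g = smult (- poly g 0) [:e, \<alpha>:]"
  proof (rule pext)
    fix x
    have "- ((e+0+\<alpha>*x) * poly g 0) = (-(x+0) + 3/2*x + c) * poly g (x+0)" by (rule LY)
    then show "poly ([:c, 1/2:] * g) x = poly (smult (- poly g 0) [:e, \<alpha>:]) x" by (simp add: algebra_simps)
  qed
  have nz: "[:c, 1/2:] \<noteq> (0::complex poly)" by auto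
  show ?thesis
  proof (cases "poly g 0 = 0")
    case True
    then have "[:c, 1/2:] * g = 0" using m0 by simp
    then have "g = 0" using nz by (metis mult_eq_0_iff)
    then show ?thesis by simp
  next
    case False
    have gf: "g = [:coeff g 0, coeff g 1:]" by (rule lin_form[OF deg_le1[OF nz m0]])
    define G where "G = coeff g 0"
    define H where "H = coeff g 1"
    have G0: "G \<noteq> 0" using False unfolding G_def by (simp add: poly_0_coeff_0)
    have pg: "\<And>x. poly g x = G + H * x" unfolding G_def H_def by (subst gf) simp
    have i1: "- ((e+m+\<alpha>*l) * (G + H*m)) = (-(l+m) + 3/2*l + c) * (G + H*(l+m))" for l m
      using LY[of m l] unfolding pg .
    have p1: "- ((e+0+\<alpha>*0) * (G + H*0)) = (-(0+0) + 3/2*0 + c) * (G + H*(0+0))" by (rule i1)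
    have p2: "- ((e+0+\<alpha>*1) * (G + H*0)) = (-(1+0) + 3/2*1 + c) * (G + H*(1+0))" by (rule i1)
    have p3: "- ((e+0+\<alpha>*(-1)) * (G + H*0)) = (-((-1)+0) + 3/2*(-1) + c) * (G + H*((-1)+0))" by (rule i1)
    have E1: "H = 0" using p1 p2 p3 by algebra
    have "(\<alpha> + 1/2) * G = 0" using p1 p2 p3 E1 by algebra
    then have "\<alpha> + 1/2 = 0" using G0 by simp
    then have "\<alpha> = - 1/2" by algebra
    moreover have "(c + e) * G = 0" using p1 E1 by algebra
    then have "c + e = 0" using G0 by simp
    moreover have "g = [:G:]" using gf E1 unfolding G_def H_def by simp
    ultimately show ?thesis using G0 by blast
  qed
qed

lemma LY_10:
  fixes g :: "complex poly"
  assumes LY: "\<And>l m. - ((e+m+\<alpha>*l) * poly g m) = (-(l+m) + 1*l + 0) * poly g (l+m)"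
    and al: "\<alpha> \<noteq> 0"
  shows "g = 0 \<or> (\<exists>k. k \<noteq> 0 \<and> g = monom k 1 \<and> e = 0 \<and> \<alpha> = 1)"
proof -
  have "- ((e+0+\<alpha>*((1-e)/\<alpha>)) * poly g 0) = (-((1-e)/\<alpha>+0) + 1*((1-e)/\<alpha>) + 0) * poly g ((1-e)/\<alpha>+0)" by (rule LY)
  then have g0: "poly g 0 = 0" using al by (simp add: field_simps)
  have lm: "[:e, 1-\<alpha>:] * g = 0"
  proof (rule pext)
    fix x
    have "- ((e+x+\<alpha>*(-x)) * poly g x) = (-((-x)+x) + 1*(-x) + 0) * poly g ((-x)+x)" by (rule LY)
    then show "poly ([:e, 1-\<alpha>:] * g) x = poly 0 x" using g0 by (simp add: algebra_simps)
  qed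
  show ?thesis
  proof (cases "[:e, 1-\<alpha>:] = 0")
    case False
    then have "g = 0" using lm by (metis mult_eq_0_iff)
    then show ?thesis by simp
  next
    case True
    then have e0: "e = 0" and a1: "\<alpha> = 1" by auto
    have gx: "g = monom (poly g 1) 1"
    proof (rule pext)
      fix x
      have "- ((e+1+\<alpha>*(x-1)) * poly g 1) = (-((x-1)+1) + 1*(x-1) + 0) * poly g ((x-1)+1)" by (rule LY)
      then show "poly g x = poly (monom (poly g 1) 1) x" using e0 a1 by (simp add: poly_monom algebra_simps)
    qed
    show ?thesis
    proof (cases "poly g 1 = 0")
      case True then show ?thesis using gx by simp
    next
      case False then show ?thesis using gx e0 a1 by blast
    qed
  qed
qed


lemma LLv0: "(e+l+\<alpha>*m) * poly 0 l - (e+m+\<alpha>*l) * poly 0 m = (l-m) * poly (0::complex poly) (l+m)"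
  by simp

lemma LLv2: "(0+l+1*m) * poly (monom c 2) l - (0+m+1*l) * poly (monom c 2) m = (l-m) * poly (monom c 2) (l+m)"
  for c l m :: complex
  by (simp add: poly_monom power2_eq_square algebra_simps)

lemma LLv3: "(0+l+2*m) * poly (monom c 3) l - (0+m+2*l) * poly (monom c 3) m = (l-m) * poly (monom c 3) (l+m)"
  for c l m :: complex
  by (simp add: poly_monom power3_eq_cube algebra_simps)

lemma valid_NF0:
  assumes bll: "\<And>d l. bLL R d l = d + 2*l"
    and LL: "\<And>l m. (\<eta>+\<beta>+l+\<alpha>*m) * poly f l - (\<eta>+\<beta>+m+\<alpha>*l) * poly f m = (l - m) * poly f (l+m)"
    and LY: "\<And>l m. - ((\<eta>+\<beta>+m+\<alpha>*l) * poly g m) = bLY R (-(l+m)) l * poly g (l+m)"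
  shows "is_ext R \<eta> (Mabg \<alpha> \<beta> 0) (NF_ext \<alpha> \<beta> 0 \<eta> f g 0)"
  using NF_suff[OF bll LL LY] NF_ext_iff by blast

lemma ntriv0:
  assumes ex: "is_ext R \<eta> (Mabg \<alpha> \<beta> 0) (NF_ext \<alpha> \<beta> 0 \<eta> f g 0)"
  shows "\<not> trivial_ext R \<eta> (Mabg \<alpha> \<beta> 0) (NF_ext \<alpha> \<beta> 0 \<eta> f g 0) \<longleftrightarrow> \<not> (\<exists>t. f = smult t [:\<eta>+\<beta>, \<alpha>:] \<and> g = 0)"
  using triv_iff[OF ex] by simp

lemma monom_not_lin:
  assumes "c \<noteq> 0" "n \<ge> 2" shows "monom c n \<noteq> smult t [:e, (a::complex):]"
proof
  assume "monom c n = smult t [:e, a:]"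
  then have "coeff (monom c n) n = coeff (smult t [:e, a:]) n" by simp
  then show False using assms by (cases n; cases "n - 1") auto
qed

lemma TSV_ab_simps: "bLL (TSV_ab a b) d l = d + 2*l" "bLY (TSV_ab a b) d l = d + a*l + b"
  "bLM (TSV_ab a b) d l = d + 2*(a-1)*l + 2*b" "bYY (TSV_ab a b) d l = d + 2*l"
  by (simp_all add: TSV_ab_def)

lemma TSV_c_simps: "bLL (TSV_c c) d l = d + 2*l" "bLY (TSV_c c) d l = d + 3/2*l + c"
  "bLM (TSV_c c) d l = d + 2*c" "bYY (TSV_c c) d l = (d + 2*l) * (- d - 2*c)"
  by (simp_all add: TSV_c_def)

lemma f_normal:
  fixes f' :: "complex poly" and e \<alpha> :: complex
  assumes "(e \<noteq> 0 \<and> f' = 0) \<or> (e = 0 \<and> (\<exists>c2 c3. f' = monom c2 2 + monom c3 3 \<and> (\<alpha> \<noteq> 1 \<longrightarrow> c2 = 0) \<and> (\<alpha> \<noteq> 2 \<longrightarrow> c3 = 0)))"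
  shows "f' = 0 \<or> (e = 0 \<and> ((\<alpha> = 1 \<and> (\<exists>c2. c2 \<noteq> 0 \<and> f' = monom c2 2)) \<or> (\<alpha> = 2 \<and> (\<exists>c3. c3 \<noteq> 0 \<and> f' = monom c3 3))))"
proof -
  consider (A) "f' = 0" | (B) c2 c3 where "e = 0" "f' = monom c2 2 + monom c3 3" "\<alpha> \<noteq> 1 \<longrightarrow> c2 = 0" "\<alpha> \<noteq> 2 \<longrightarrow> c3 = 0"
    using assms by blast
  then show ?thesis
  proof cases
    case A then show ?thesis by simp
  next
    case B
    show ?thesis
    proof (cases "\<alpha> = 1")
      case True
      then have "f' = monom c2 2" using B by simp
      then show ?thesis using B True by (cases "c2 = 0") auto
    next
      case F1: False
      show ?thesis
      proof (cases "\<alpha> = 2")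
        case True
        then have "f' = monom c3 3" using B F1 by simp
        then show ?thesis using B True by (cases "c3 = 0") auto
      next
        case False
        then show ?thesis using B F1 by simp
      qed
    qed
  qed
qed

lemma classif_ab:
  assumes ab: "(a, b) \<noteq> (1, 0)" and al: "\<alpha> \<noteq> 0"
  shows "classification TYPE('v::ab_group_add) (TSV_ab a b) \<alpha> \<beta> 0 \<eta> (list_ab a b \<alpha> \<beta> \<eta>)"
proof (rule classif_generic)
  fix f g h assume ex: "is_ext (TSV_ab a b) \<eta> (Mabg \<alpha> \<beta> 0) (NF_ext \<alpha> \<beta> 0 \<eta> f g h)"
  have cm: "is_cmod (TSV_ab a b) (NF \<alpha> \<beta> 0 \<eta> f g h)" using ex NF_ext_iff by blast
  show "h = 0"
  proof (rule H0_a)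
    fix l m
    show "(l - m) * poly h (l+m) = 0" using NF_eqs(4)[OF cm, of l m] by (simp add: TSV_ab_simps)
  qed
next
  fix f g assume ex: "is_ext (TSV_ab a b) \<eta> (Mabg \<alpha> \<beta> 0) (NF_ext \<alpha> \<beta> 0 \<eta> f g 0)"
    and nt: "\<not> trivial_ext (TSV_ab a b) \<eta> (Mabg \<alpha> \<beta> 0) (NF_ext \<alpha> \<beta> 0 \<eta> f g 0)"
  have cm: "is_cmod (TSV_ab a b) (NF \<alpha> \<beta> 0 \<eta> f g 0)" using ex NF_ext_iff by blast
  have LL: "(\<eta>+\<beta>+l+\<alpha>*m) * poly f l - (\<eta>+\<beta>+m+\<alpha>*l) * poly f m = (l - m) * poly f (l+m)" for l m
    using NF_eqs(1)[OF cm, of l m] by (simp add: TSV_ab_simps)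
  have LY: "- ((\<eta>+\<beta>+m+\<alpha>*l) * poly g m) = (-(l+m) + a*l + b) * poly g (l+m)" for l m
    using NF_eqs(2)[OF cm, of l m] by (simp add: TSV_ab_simps)
  have nt': "\<not> (\<exists>t. f = smult t [:\<eta>+\<beta>, \<alpha>:] \<and> g = 0)" using nt ntriv0[OF ex] by blast
  obtain t f' where tf: "f = f' + smult t [:\<eta>+\<beta>, \<alpha>:]"
    and fc: "((\<eta>+\<beta> \<noteq> 0 \<and> f' = 0) \<or> (\<eta>+\<beta> = 0 \<and> (\<exists>c2 c3. f' = monom c2 2 + monom c3 3 \<and> (\<alpha> \<noteq> 1 \<longrightarrow> c2 = 0) \<and> (\<alpha> \<noteq> 2 \<longrightarrow> c3 = 0))))"
    using LL_cases[OF LL al] by blast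
  have eq: "ext_equiv (TSV_ab a b) \<eta> (Mabg \<alpha> \<beta> 0) (NF_ext \<alpha> \<beta> 0 \<eta> f g 0) (NF_ext \<alpha> \<beta> 0 \<eta> f' g 0)"
    by (rule shift0[OF ex tf])
  have "list_ab a b \<alpha> \<beta> \<eta> f' g"
  proof -
    from LY_ab[OF LY ab al] consider (g0) "g = 0"
      | (gk) k where "k \<noteq> 0" "g = [:k:]" "\<alpha> = 1 - a" "a \<noteq> 1" "b + (\<eta>+\<beta>) = 0"
      | (gd) k where "k \<noteq> 0" "g = smult k [:1, -1/b:]" "a = 1" "b \<noteq> 0" "b + (\<eta>+\<beta>) = 0" "\<alpha> = 1"
      by blast
    then show ?thesis
    proof cases
      case g0
      have "f' \<noteq> 0" using nt' tf g0 by auto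
      then have "\<eta>+\<beta> = 0 \<and> ((\<alpha> = 1 \<and> (\<exists>c2. c2 \<noteq> 0 \<and> f' = monom c2 2)) \<or> (\<alpha> = 2 \<and> (\<exists>c3. c3 \<noteq> 0 \<and> f' = monom c3 3)))"
        using f_normal[OF fc] by blast
      then show ?thesis using g0 unfolding list_ab_def by (simp add: add.commute)
    next
      case gk
      show ?thesis
      proof (cases "\<eta>+\<beta> = 0")
        case True
        then obtain c2 c3 where cc: "f' = monom c2 2 + monom c3 3" "\<alpha> \<noteq> 1 \<longrightarrow> c2 = 0" "\<alpha> \<noteq> 2 \<longrightarrow> c3 = 0"
          using fc by blast
        have "(if \<alpha> = 1 then (\<exists>c2. f' = monom c2 2) else if \<alpha> = 2 then (\<exists>c3. f' = monom c3 3) else f' = 0)"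
          using cc by auto
        moreover have "b = 0" using gk True by simp
        ultimately show ?thesis using gk True unfolding list_ab_def by (simp add: add.commute)
      next
        case False
        then have "f' = 0" using fc by blast
        then show ?thesis using gk False unfolding list_ab_def by (simp add: algebra_simps)
      qed
    next
      case gd
      then have "\<eta>+\<beta> \<noteq> 0" by auto
      then have "f' = 0" using fc by blast
      then show ?thesis using gd unfolding list_ab_def by (auto simp: algebra_simps)
    qed
  qed
  then show "\<exists>f' g'. list_ab a b \<alpha> \<beta> \<eta> f' g' \<and> ext_equiv (TSV_ab a b) \<eta> (Mabg \<alpha> \<beta> 0) (NF_ext \<alpha> \<beta> 0 \<eta> f g 0) (NF_ext \<alpha> \<beta> 0 \<eta> f' g' 0)"
    using eq by blast
next
  fix f g assume lst: "list_ab a b \<alpha> \<beta> \<eta> f g"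
  have bll: "\<And>d l. bLL (TSV_ab a b) d l = d + 2*l" by (simp add: TSV_ab_simps)
  have LL: "(\<eta>+\<beta>+l+\<alpha>*m) * poly f l - (\<eta>+\<beta>+m+\<alpha>*l) * poly f m = (l - m) * poly f (l+m)" for l m
  proof -
    have "f = 0 \<or> (\<eta>+\<beta> = 0 \<and> \<alpha> = 1 \<and> (\<exists>c. f = monom c 2)) \<or> (\<eta>+\<beta> = 0 \<and> \<alpha> = 2 \<and> (\<exists>c. f = monom c 3))"
      using lst unfolding list_ab_def by (auto simp: add.commute split: if_splits)
    then show ?thesis using LLv2[of l m] LLv3[of l m] by auto
  qed
  have LY: "- ((\<eta>+\<beta>+m+\<alpha>*l) * poly g m) = bLY (TSV_ab a b) (-(l+m)) l * poly g (l+m)" for l m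
  proof -
    consider (g0) "g = 0" | (gk) k where "g = [:k:]" "\<alpha> = 1 - a" "b + \<beta> + \<eta> = 0"
      | (gd) k where "g = smult k [:1, -1/b:]" "a = 1" "b \<noteq> 0" "b + \<beta> + \<eta> = 0" "\<alpha> = 1"
      using lst unfolding list_ab_def by auto
    then show ?thesis
    proof cases
      case g0 then show ?thesis by simp
    next
      case gk
      have x: "poly g m = k" "poly g (l+m) = k" using gk by simp_all
      have "- ((\<eta>+\<beta>+m+\<alpha>*l) * k) = (-(l+m) + a*l + b) * k" using gk(2,3) by algebra
      then show ?thesis unfolding TSV_ab_simps x .
    next
      case gd
      have x: "b * poly g m = k * (b - m)" "b * poly g (l+m) = k * (b - (l+m))" using gd(1,3) by (simp_all add: field_simps)
      have gen: "\<And>X Y. b * X = k * (b - m) \<Longrightarrow> b * Y = k * (b - (l+m)) \<Longrightarrow>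
          - ((\<eta>+\<beta>+m+\<alpha>*l) * X) = (-(l+m) + a*l + b) * Y"
      proof -
        fix X Y assume h: "b * X = k * (b - m)" "b * Y = k * (b - (l+m))"
        have "b * (- ((\<eta>+\<beta>+m+\<alpha>*l) * X) - (-(l+m) + a*l + b) * Y) = 0"
          using h gd(2,4,5) by algebra
        then show "- ((\<eta>+\<beta>+m+\<alpha>*l) * X) = (-(l+m) + a*l + b) * Y" using gd(3) by simp
      qed
      show ?thesis unfolding TSV_ab_simps by (rule gen[OF x])
    qed
  qed
  have ex: "is_ext (TSV_ab a b) \<eta> (Mabg \<alpha> \<beta> 0) (NF_ext \<alpha> \<beta> 0 \<eta> f g 0)"
    by (rule valid_NF0[OF bll LL LY])
  moreover have "\<not> (\<exists>t. f = smult t [:\<eta>+\<beta>, \<alpha>:] \<and> g = 0)"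
  proof
    assume "\<exists>t. f = smult t [:\<eta>+\<beta>, \<alpha>:] \<and> g = 0"
    then obtain t where t: "f = smult t [:\<eta>+\<beta>, \<alpha>:]" "g = 0" by blast
    then have "(\<alpha> = 1 \<and> (\<exists>c2. c2 \<noteq> 0 \<and> f = monom c2 2)) \<or> (\<alpha> = 2 \<and> (\<exists>c3. c3 \<noteq> 0 \<and> f = monom c3 3))"
      using lst unfolding list_ab_def by (auto simp: pCons_eq_0_iff)
    then show False
    proof
      assume "\<alpha> = 1 \<and> (\<exists>c2. c2 \<noteq> 0 \<and> f = monom c2 2)"
      then obtain c2 where c: "c2 \<noteq> 0" "f = monom c2 2" by blast
      have "monom c2 2 \<noteq> smult t [:\<eta>+\<beta>, \<alpha>:]" by (rule monom_not_lin) (use c in auto)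
      then show False using t c by simp
    next
      assume "\<alpha> = 2 \<and> (\<exists>c3. c3 \<noteq> 0 \<and> f = monom c3 3)"
      then obtain c3 where c: "c3 \<noteq> 0" "f = monom c3 3" by blast
      have "monom c3 3 \<noteq> smult t [:\<eta>+\<beta>, \<alpha>:]" by (rule monom_not_lin) (use c in auto)
      then show False using t c by simp
    qed
  qed
  ultimately show "is_ext (TSV_ab a b) \<eta> (Mabg \<alpha> \<beta> 0) (NF_ext \<alpha> \<beta> 0 \<eta> f g 0) \<and>
       \<not> trivial_ext (TSV_ab a b) \<eta> (Mabg \<alpha> \<beta> 0) (NF_ext \<alpha> \<beta> 0 \<eta> f g 0)"
    using ntriv0 by blast
qed


lemma classif_c:
  assumes al: "\<alpha> \<noteq> 0"
  shows "classification TYPE('v::ab_group_add) (TSV_c c) \<alpha> \<beta> 0 \<eta> (list_c c \<alpha> \<beta> \<eta>)"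
proof (rule classif_generic)
  fix f g h assume ex: "is_ext (TSV_c c) \<eta> (Mabg \<alpha> \<beta> 0) (NF_ext \<alpha> \<beta> 0 \<eta> f g h)"
  have cm: "is_cmod (TSV_c c) (NF \<alpha> \<beta> 0 \<eta> f g h)" using ex NF_ext_iff by blast
  show "h = 0"
  proof (rule H0_c)
    fix l m
    have "0 = ((-(l+m)) + 2*l) * (- (-(l+m)) - 2*c) * poly h (l+m)"
      using NF_eqs(4)[OF cm, of l m] by (simp add: TSV_c_simps)
    moreover have "((-(l+m)) + 2*l) * (- (-(l+m)) - 2*c) = (l - m) * (l + m - 2*c)" by (simp add: algebra_simps)
    ultimately show "(l - m) * (l + m - 2*c) * poly h (l+m) = 0" by metis
  qed
next
  fix f g assume ex: "is_ext (TSV_c c) \<eta> (Mabg \<alpha> \<beta> 0) (NF_ext \<alpha> \<beta> 0 \<eta> f g 0)"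
    and nt: "\<not> trivial_ext (TSV_c c) \<eta> (Mabg \<alpha> \<beta> 0) (NF_ext \<alpha> \<beta> 0 \<eta> f g 0)"
  have cm: "is_cmod (TSV_c c) (NF \<alpha> \<beta> 0 \<eta> f g 0)" using ex NF_ext_iff by blast
  have LL: "(\<eta>+\<beta>+l+\<alpha>*m) * poly f l - (\<eta>+\<beta>+m+\<alpha>*l) * poly f m = (l - m) * poly f (l+m)" for l m
    using NF_eqs(1)[OF cm, of l m] by (simp add: TSV_c_simps)
  have LY: "- ((\<eta>+\<beta>+m+\<alpha>*l) * poly g m) = (-(l+m) + 3/2*l + c) * poly g (l+m)" for l m
    using NF_eqs(2)[OF cm, of l m] by (simp add: TSV_c_simps)
  have nt': "\<not> (\<exists>t. f = smult t [:\<eta>+\<beta>, \<alpha>:] \<and> g = 0)" using nt ntriv0[OF ex] by blast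
  obtain t f' where tf: "f = f' + smult t [:\<eta>+\<beta>, \<alpha>:]"
    and fc: "((\<eta>+\<beta> \<noteq> 0 \<and> f' = 0) \<or> (\<eta>+\<beta> = 0 \<and> (\<exists>c2 c3. f' = monom c2 2 + monom c3 3 \<and> (\<alpha> \<noteq> 1 \<longrightarrow> c2 = 0) \<and> (\<alpha> \<noteq> 2 \<longrightarrow> c3 = 0))))"
    using LL_cases[OF LL al] by blast
  have eq: "ext_equiv (TSV_c c) \<eta> (Mabg \<alpha> \<beta> 0) (NF_ext \<alpha> \<beta> 0 \<eta> f g 0) (NF_ext \<alpha> \<beta> 0 \<eta> f' g 0)"
    by (rule shift0[OF ex tf])
  have "list_c c \<alpha> \<beta> \<eta> f' g"
  proof -
    from LY_c[OF LY] consider (g0) "g = 0"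
      | (gk) k where "k \<noteq> 0" "g = [:k:]" "\<alpha> = - 1 / 2" "c + (\<eta>+\<beta>) = 0"
      by blast
    then show ?thesis
    proof cases
      case g0
      have "f' \<noteq> 0" using nt' tf g0 by auto
      then have "\<eta>+\<beta> = 0 \<and> ((\<alpha> = 1 \<and> (\<exists>c2. c2 \<noteq> 0 \<and> f' = monom c2 2)) \<or> (\<alpha> = 2 \<and> (\<exists>c3. c3 \<noteq> 0 \<and> f' = monom c3 3)))"
        using f_normal[OF fc] by blast
      then show ?thesis using g0 unfolding list_c_def by (simp add: add.commute)
    next
      case gk
      have "f' = 0"
      proof (cases "\<eta>+\<beta> = 0")
        case True
        then obtain c2 c3 where cc: "f' = monom c2 2 + monom c3 3" "\<alpha> \<noteq> 1 \<longrightarrow> c2 = 0" "\<alpha> \<noteq> 2 \<longrightarrow> c3 = 0"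
          using fc by blast
        moreover have "\<alpha> \<noteq> 1" "\<alpha> \<noteq> 2" using gk(3) by (simp_all add: complex_eq_iff)
        ultimately show ?thesis by simp
      next
        case False then show ?thesis using fc by blast
      qed
      then show ?thesis using gk unfolding list_c_def by (auto simp: algebra_simps)
    qed
  qed
  then show "\<exists>f' g'. list_c c \<alpha> \<beta> \<eta> f' g' \<and> ext_equiv (TSV_c c) \<eta> (Mabg \<alpha> \<beta> 0) (NF_ext \<alpha> \<beta> 0 \<eta> f g 0) (NF_ext \<alpha> \<beta> 0 \<eta> f' g' 0)"
    using eq by blast
next
  fix f g assume lst: "list_c c \<alpha> \<beta> \<eta> f g"
  have bll: "\<And>d l. bLL (TSV_c c) d l = d + 2*l" by (simp add: TSV_c_simps)
  have LL: "(\<eta>+\<beta>+l+\<alpha>*m) * poly f l - (\<eta>+\<beta>+m+\<alpha>*l) * poly f m = (l - m) * poly f (l+m)" for l m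
  proof -
    have "f = 0 \<or> (\<eta>+\<beta> = 0 \<and> \<alpha> = 1 \<and> (\<exists>c. f = monom c 2)) \<or> (\<eta>+\<beta> = 0 \<and> \<alpha> = 2 \<and> (\<exists>c. f = monom c 3))"
      using lst unfolding list_c_def by (auto simp: add.commute)
    then show ?thesis using LLv2[of l m] LLv3[of l m] by auto
  qed
  have LY: "- ((\<eta>+\<beta>+m+\<alpha>*l) * poly g m) = bLY (TSV_c c) (-(l+m)) l * poly g (l+m)" for l m
  proof -
    consider (g0) "g = 0" | (gk) k where "g = [:k:]" "\<alpha> = - 1 / 2" "c + \<beta> + \<eta> = 0"
      using lst unfolding list_c_def by auto
    then show ?thesis
    proof cases
      case g0 then show ?thesis by simp
    next
      case gk
      have x: "poly g m = k" "poly g (l+m) = k" using gk by simp_all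
      have "- ((\<eta>+\<beta>+m+\<alpha>*l) * k) = (-(l+m) + 3/2*l + c) * k" using gk(2,3) by algebra
      then show ?thesis unfolding TSV_c_simps x .
    qed
  qed
  have ex: "is_ext (TSV_c c) \<eta> (Mabg \<alpha> \<beta> 0) (NF_ext \<alpha> \<beta> 0 \<eta> f g 0)"
    by (rule valid_NF0[OF bll LL LY])
  moreover have "\<not> (\<exists>t. f = smult t [:\<eta>+\<beta>, \<alpha>:] \<and> g = 0)"
  proof
    assume "\<exists>t. f = smult t [:\<eta>+\<beta>, \<alpha>:] \<and> g = 0"
    then obtain t where t: "f = smult t [:\<eta>+\<beta>, \<alpha>:]" "g = 0" by blast
    then have "(\<alpha> = 1 \<and> (\<exists>c2. c2 \<noteq> 0 \<and> f = monom c2 2)) \<or> (\<alpha> = 2 \<and> (\<exists>c3. c3 \<noteq> 0 \<and> f = monom c3 3))"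
      using lst unfolding list_c_def by auto
    then show False
    proof
      assume "\<alpha> = 1 \<and> (\<exists>c2. c2 \<noteq> 0 \<and> f = monom c2 2)"
      then obtain c2 where c: "c2 \<noteq> 0" "f = monom c2 2" by blast
      have "monom c2 2 \<noteq> smult t [:\<eta>+\<beta>, \<alpha>:]" by (rule monom_not_lin) (use c in auto)
      then show False using t c by simp
    next
      assume "\<alpha> = 2 \<and> (\<exists>c3. c3 \<noteq> 0 \<and> f = monom c3 3)"
      then obtain c3 where c: "c3 \<noteq> 0" "f = monom c3 3" by blast
      have "monom c3 3 \<noteq> smult t [:\<eta>+\<beta>, \<alpha>:]" by (rule monom_not_lin) (use c in auto)
      then show False using t c by simp
    qed
  qed
  ultimately show "is_ext (TSV_c c) \<eta> (Mabg \<alpha> \<beta> 0) (NF_ext \<alpha> \<beta> 0 \<eta> f g 0) \<and>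
       \<not> trivial_ext (TSV_c c) \<eta> (Mabg \<alpha> \<beta> 0) (NF_ext \<alpha> \<beta> 0 \<eta> f g 0)"
    using ntriv0 by blast
qed


lemma classif_10_g0:
  assumes al: "\<alpha> \<noteq> 0"
  shows "classification TYPE('v::ab_group_add) (TSV_ab 1 0) \<alpha> \<beta> 0 \<eta> (list_10 \<alpha> \<beta> 0 \<eta>)"
proof (rule classif_generic)
  fix f g h assume ex: "is_ext (TSV_ab 1 0) \<eta> (Mabg \<alpha> \<beta> 0) (NF_ext \<alpha> \<beta> 0 \<eta> f g h)"
  have cm: "is_cmod (TSV_ab 1 0) (NF \<alpha> \<beta> 0 \<eta> f g h)" using ex NF_ext_iff by blast
  show "h = 0"
  proof (rule H0_a)
    fix l m
    show "(l - m) * poly h (l+m) = 0" using NF_eqs(4)[OF cm, of l m] by (simp add: TSV_ab_simps)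
  qed
next
  fix f g assume ex: "is_ext (TSV_ab 1 0) \<eta> (Mabg \<alpha> \<beta> 0) (NF_ext \<alpha> \<beta> 0 \<eta> f g 0)"
    and nt: "\<not> trivial_ext (TSV_ab 1 0) \<eta> (Mabg \<alpha> \<beta> 0) (NF_ext \<alpha> \<beta> 0 \<eta> f g 0)"
  have cm: "is_cmod (TSV_ab 1 0) (NF \<alpha> \<beta> 0 \<eta> f g 0)" using ex NF_ext_iff by blast
  have LL: "(\<eta>+\<beta>+l+\<alpha>*m) * poly f l - (\<eta>+\<beta>+m+\<alpha>*l) * poly f m = (l - m) * poly f (l+m)" for l m
    using NF_eqs(1)[OF cm, of l m] by (simp add: TSV_ab_simps)
  have LY: "- ((\<eta>+\<beta>+m+\<alpha>*l) * poly g m) = (-(l+m) + 1*l + 0) * poly g (l+m)" for l m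
    using NF_eqs(2)[OF cm, of l m] by (simp add: TSV_ab_simps)
  have nt': "\<not> (\<exists>t. f = smult t [:\<eta>+\<beta>, \<alpha>:] \<and> g = 0)" using nt ntriv0[OF ex] by blast
  obtain t f' where tf: "f = f' + smult t [:\<eta>+\<beta>, \<alpha>:]"
    and fc: "((\<eta>+\<beta> \<noteq> 0 \<and> f' = 0) \<or> (\<eta>+\<beta> = 0 \<and> (\<exists>c2 c3. f' = monom c2 2 + monom c3 3 \<and> (\<alpha> \<noteq> 1 \<longrightarrow> c2 = 0) \<and> (\<alpha> \<noteq> 2 \<longrightarrow> c3 = 0))))"
    using LL_cases[OF LL al] by blast
  have eq: "ext_equiv (TSV_ab 1 0) \<eta> (Mabg \<alpha> \<beta> 0) (NF_ext \<alpha> \<beta> 0 \<eta> f g 0) (NF_ext \<alpha> \<beta> 0 \<eta> f' g 0)"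
    by (rule shift0[OF ex tf])
  have "list_10 \<alpha> \<beta> 0 \<eta> f' g"
  proof -
    from LY_10[OF LY al] consider (g0) "g = 0"
      | (gk) k where "k \<noteq> 0" "g = monom k 1" "\<eta>+\<beta> = 0" "\<alpha> = 1"
      by blast
    then show ?thesis
    proof cases
      case g0
      have "f' \<noteq> 0" using nt' tf g0 by auto
      then have "\<eta>+\<beta> = 0 \<and> ((\<alpha> = 1 \<and> (\<exists>c2. c2 \<noteq> 0 \<and> f' = monom c2 2)) \<or> (\<alpha> = 2 \<and> (\<exists>c3. c3 \<noteq> 0 \<and> f' = monom c3 3)))"
        using f_normal[OF fc] by blast
      then show ?thesis using g0 unfolding list_10_def by (simp add: add.commute)
    next
      case gk
      then obtain c2 c3 where cc: "f' = monom c2 2 + monom c3 3" "\<alpha> \<noteq> 1 \<longrightarrow> c2 = 0" "\<alpha> \<noteq> 2 \<longrightarrow> c3 = 0"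
        using fc by blast
      then have "f' = monom c2 2" using gk(4) by simp
      then show ?thesis using gk unfolding list_10_def by (auto simp: add.commute)
    qed
  qed
  then show "\<exists>f' g'. list_10 \<alpha> \<beta> 0 \<eta> f' g' \<and> ext_equiv (TSV_ab 1 0) \<eta> (Mabg \<alpha> \<beta> 0) (NF_ext \<alpha> \<beta> 0 \<eta> f g 0) (NF_ext \<alpha> \<beta> 0 \<eta> f' g' 0)"
    using eq by blast
next
  fix f g assume lst: "list_10 \<alpha> \<beta> 0 \<eta> f g"
  have bll: "\<And>d l. bLL (TSV_ab 1 0) d l = d + 2*l" by (simp add: TSV_ab_simps)
  have LL: "(\<eta>+\<beta>+l+\<alpha>*m) * poly f l - (\<eta>+\<beta>+m+\<alpha>*l) * poly f m = (l - m) * poly f (l+m)" for l m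
  proof -
    have "(\<eta>+\<beta> = 0 \<and> \<alpha> = 1 \<and> (\<exists>c. f = monom c 2)) \<or> (\<eta>+\<beta> = 0 \<and> \<alpha> = 2 \<and> (\<exists>c. f = monom c 3))"
      using lst unfolding list_10_def by (auto simp: add.commute)
    then show ?thesis using LLv2[of l m] LLv3[of l m] by auto
  qed
  have LY: "- ((\<eta>+\<beta>+m+\<alpha>*l) * poly g m) = bLY (TSV_ab 1 0) (-(l+m)) l * poly g (l+m)" for l m
  proof -
    consider (g0) "g = 0" | (gk) k where "g = monom k 1" "\<alpha> = 1" "\<beta> + \<eta> = 0"
      using lst unfolding list_10_def by auto
    then show ?thesis
    proof cases
      case g0 then show ?thesis by simp
    next
      case gk
      have x: "poly g m = k * m" "poly g (l+m) = k * (l+m)" using gk by (simp_all add: poly_monom)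
      have "- ((\<eta>+\<beta>+m+\<alpha>*l) * (k*m)) = (-(l+m) + 1*l + 0) * (k*(l+m))" using gk(2,3) by algebra
      then show ?thesis unfolding TSV_ab_simps x .
    qed
  qed
  have ex: "is_ext (TSV_ab 1 0) \<eta> (Mabg \<alpha> \<beta> 0) (NF_ext \<alpha> \<beta> 0 \<eta> f g 0)"
    by (rule valid_NF0[OF bll LL LY])
  moreover have "\<not> (\<exists>t. f = smult t [:\<eta>+\<beta>, \<alpha>:] \<and> g = 0)"
  proof
    assume "\<exists>t. f = smult t [:\<eta>+\<beta>, \<alpha>:] \<and> g = 0"
    then obtain t where t: "f = smult t [:\<eta>+\<beta>, \<alpha>:]" "g = 0" by blast
    then have "(\<alpha> = 1 \<and> (\<exists>c2. c2 \<noteq> 0 \<and> f = monom c2 2)) \<or> (\<alpha> = 2 \<and> (\<exists>c3. c3 \<noteq> 0 \<and> f = monom c3 3))"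
      using lst unfolding list_10_def by auto
    then show False
    proof
      assume "\<alpha> = 1 \<and> (\<exists>c2. c2 \<noteq> 0 \<and> f = monom c2 2)"
      then obtain c2 where c: "c2 \<noteq> 0" "f = monom c2 2" by blast
      have "monom c2 2 \<noteq> smult t [:\<eta>+\<beta>, \<alpha>:]" by (rule monom_not_lin) (use c in auto)
      then show False using t c by simp
    next
      assume "\<alpha> = 2 \<and> (\<exists>c3. c3 \<noteq> 0 \<and> f = monom c3 3)"
      then obtain c3 where c: "c3 \<noteq> 0" "f = monom c3 3" by blast
      have "monom c3 3 \<noteq> smult t [:\<eta>+\<beta>, \<alpha>:]" by (rule monom_not_lin) (use c in auto)
      then show False using t c by simp
    qed
  qed
  ultimately show "is_ext (TSV_ab 1 0) \<eta> (Mabg \<alpha> \<beta> 0) (NF_ext \<alpha> \<beta> 0 \<eta> f g 0) \<and>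
       \<not> trivial_ext (TSV_ab 1 0) \<eta> (Mabg \<alpha> \<beta> 0) (NF_ext \<alpha> \<beta> 0 \<eta> f g 0)"
    using ntriv0 by blast
qed

lemma classif_10_gne:
  assumes ga: "\<gamma> \<noteq> 0"
  shows "classification TYPE('v::ab_group_add) (TSV_ab 1 0) \<alpha> \<beta> \<gamma> \<eta> (list_10 \<alpha> \<beta> \<gamma> \<eta>)"
proof (rule classif_generic)
  fix f g h assume ex: "is_ext (TSV_ab 1 0) \<eta> (Mabg \<alpha> \<beta> \<gamma>) (NF_ext \<alpha> \<beta> \<gamma> \<eta> f g h)"
  have cm: "is_cmod (TSV_ab 1 0) (NF \<alpha> \<beta> \<gamma> \<eta> f g h)" using ex NF_ext_iff by blast
  show "h = 0"
  proof (rule pext)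
    fix x show "poly h x = poly 0 x" using NF_eqs(5)[OF cm, of x] ga by simp
  qed
next
  fix f g assume ex: "is_ext (TSV_ab 1 0) \<eta> (Mabg \<alpha> \<beta> \<gamma>) (NF_ext \<alpha> \<beta> \<gamma> \<eta> f g 0)"
    and nt: "\<not> trivial_ext (TSV_ab 1 0) \<eta> (Mabg \<alpha> \<beta> \<gamma>) (NF_ext \<alpha> \<beta> \<gamma> \<eta> f g 0)"
  have cm: "is_cmod (TSV_ab 1 0) (NF \<alpha> \<beta> \<gamma> \<eta> f g 0)" using ex NF_ext_iff by blast
  define G where "G = poly g 0"
  have gc: "g = [:G:]"
  proof (rule pext)
    fix x
    have "\<gamma> * (poly g x - poly g 0) = 0" using NF_eqs(4)[OF cm, of x 0] by simp
    then show "poly g x = poly [:G:] x" using ga unfolding G_def by simp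
  qed
  have fc: "f = smult (G / \<gamma>) [:\<eta>+\<beta>, \<alpha>:]"
  proof (rule pext)
    fix x
    have "\<gamma> * poly f x - (\<eta>+\<beta>+0+\<alpha>*x) * poly g 0 = bLY (TSV_ab 1 0) (-(x+0)) x * poly g (x+0)"
      by (rule NF_eqs(2)[OF cm])
    then have "\<gamma> * poly f x = (\<eta>+\<beta>+\<alpha>*x) * G" using gc by (simp add: TSV_ab_simps)
    then show "poly f x = poly (smult (G / \<gamma>) [:\<eta>+\<beta>, \<alpha>:]) x" using ga by (simp add: field_simps)
  qed
  have "g = [:(G / \<gamma>) * \<gamma>:]" using gc ga by simp
  then have "trivial_ext (TSV_ab 1 0) \<eta> (Mabg \<alpha> \<beta> \<gamma>) (NF_ext \<alpha> \<beta> \<gamma> \<eta> f g 0)"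
    using triv_iff[OF ex] fc by blast
  then show "\<exists>f' g'. list_10 \<alpha> \<beta> \<gamma> \<eta> f' g' \<and> ext_equiv (TSV_ab 1 0) \<eta> (Mabg \<alpha> \<beta> \<gamma>) (NF_ext \<alpha> \<beta> \<gamma> \<eta> f g 0) (NF_ext \<alpha> \<beta> \<gamma> \<eta> f' g' 0)"
    using nt by blast
next
  fix f g assume "list_10 \<alpha> \<beta> \<gamma> \<eta> f g"
  then show "is_ext (TSV_ab 1 0) \<eta> (Mabg \<alpha> \<beta> \<gamma>) (NF_ext \<alpha> \<beta> \<gamma> \<eta> f g 0) \<and>
       \<not> trivial_ext (TSV_ab 1 0) \<eta> (Mabg \<alpha> \<beta> \<gamma>) (NF_ext \<alpha> \<beta> \<gamma> \<eta> f g 0)"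
    using ga unfolding list_10_def by simp
qed

lemma classif_10:
  assumes "(\<alpha>, \<gamma>) \<noteq> (0, 0)"
  shows "classification TYPE('v::ab_group_add) (TSV_ab 1 0) \<alpha> \<beta> \<gamma> \<eta> (list_10 \<alpha> \<beta> \<gamma> \<eta>)"
proof (cases "\<gamma> = 0")
  case True
  then have "\<alpha> \<noteq> 0" using assms by simp
  then show ?thesis using classif_10_g0 True by simp
next
  case False
  then show ?thesis by (rule classif_10_gne)
qed

theorem theorem4p4:
  shows "(\<forall>a b \<alpha> \<beta> \<eta>. (a, b) \<noteq> (1, 0) \<and> \<alpha> \<noteq> 0 \<longrightarrow>
            classification TYPE('v::ab_group_add) (TSV_ab a b) \<alpha> \<beta> 0 \<eta> (list_ab a b \<alpha> \<beta> \<eta>))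
       \<and> (\<forall>\<alpha> \<beta> \<gamma> \<eta>. (\<alpha>, \<gamma>) \<noteq> (0, 0) \<longrightarrow>
            classification TYPE('v) (TSV_ab 1 0) \<alpha> \<beta> \<gamma> \<eta> (list_10 \<alpha> \<beta> \<gamma> \<eta>))
       \<and> (\<forall>c \<alpha> \<beta> \<eta>. \<alpha> \<noteq> 0 \<longrightarrow>
            classification TYPE('v) (TSV_c c) \<alpha> \<beta> 0 \<eta> (list_c c \<alpha> \<beta> \<eta>))"
proof (intro conjI allI impI)
  fix a b \<alpha> \<beta> \<eta> :: complex
  assume h: "(a, b) \<noteq> (1, 0) \<and> \<alpha> \<noteq> 0"
  show "classification TYPE('v) (TSV_ab a b) \<alpha> \<beta> 0 \<eta> (list_ab a b \<alpha> \<beta> \<eta>)"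
    by (rule classif_ab) (use h in auto)
next
  fix \<alpha> \<beta> \<gamma> \<eta> :: complex
  assume h: "(\<alpha>, \<gamma>) \<noteq> (0, 0)"
  show "classification TYPE('v) (TSV_ab 1 0) \<alpha> \<beta> \<gamma> \<eta> (list_10 \<alpha> \<beta> \<gamma> \<eta>)"
    by (rule classif_10[OF h])
next
  fix c \<alpha> \<beta> \<eta> :: complex
  assume h: "\<alpha> \<noteq> 0"
  show "classification TYPE('v) (TSV_c c) \<alpha> \<beta> 0 \<eta> (list_c c \<alpha> \<beta> \<eta>)"
    by (rule classif_c[OF h])
qed

end
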